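(* Let $\{d_{k,j}:k,j\geq 0\}$ be nonnegative numbers such that $D_j(\delta):=\sum_{k\geq 0}d_{k,j}\delta^k\in(0,\infty)$ for all $\delta>0$ and all $j\geq 0$. Let $\{\delta_j(\cdot):j\geq 0\}$ be positive functions on $[0,\infty)$ with $\delta_j(t)\to\infty$ as $t\to\infty$ for every $j$, assume $\sum_{j\geq 0}\frac{d_{j,j}\delta^j}{D_j(\delta)}\in(0,\infty)$ for all $\delta>0$, and let $\{N(t):t\geq 0\}$ be nonnegative integer valued random variables with $$P(N(t)=k)=\frac{\frac{d_{k,k}(\delta_k(t))^k}{D_k(\delta_k(t))}}{\sum_{j\geq 0}\frac{d_{j,j}(\delta_j(t))^j}{D_j(\delta_j(t))}},\quad k\geq 0.$$ Assume the following: (B1) there exists an integer $n\geq 0$ such that for all $j\geq n$, $d_{k,j}=d_k$ for all $k\geq 0$ (so $D_j=D:=\sum_{k\ge0}d_k\delta^k$) and $\delta_j(\cdot)=\delta(\cdot)$ do not depend on $j$; moreover there exist functions $v:(0,\infty)\to(0,\infty)$ with $v(t)\to\infty$ as $t\to\infty$, and a differentiable function $\Delta:(0,\infty)\to\mathbb{R}$, such that $\lim_{t\to\infty}\frac{1}{v(t)}\log D(ut)=\Delta(u)$ for all $u>0$; (B2) the set $\{k\geq 0:d_{k,k}>0\}$ is unbounded; (B3) for all $k\in\{0,1,\ldots,n-1\}$: if $d_k>0$ then $\lim_{t\to\infty}\frac{d_{k,k}(\delta_k(t))^k/D_k(\delta_k(t))}{d_k(\delta(t))^k/D(\delta(t))}=0$,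 and if $d_k=0$ then $d_{k,k}=0$. Let $\Lambda(\theta):=\Delta(e^\theta)-\Delta(1)$, assume that $\Delta''(1)$ exists (so that $\Lambda''(0)$ exists), and assume moreover: (i) whenever $u(t)\to1$ as $t\to\infty$, the function $H_1(t):=\log\frac{D(u(t)\delta(t))}{D(\delta(t))}-v(\delta(t))(\Delta(u(t))-\Delta(1))$ is bounded; (ii) $H_2(t):=\sqrt{v(\delta(t))}\left(\Lambda'(0)-\frac{\delta(t)D'(\delta(t))}{v(\delta(t))D(\delta(t))}\right)$ is bounded; (iii) $H_3(t):=\frac{1}{\sqrt{v(\delta(t))}}\left(\frac{\delta(t)D'(\delta(t))}{D(\delta(t))}-\mathbb{E}[N(t)]\right)$ is bounded. Then for every choice of positive numbers $\{a(t):t>0\}$ with $a(t)\to0$ and $v(\delta(t))a(t)\to\infty$ as $t\to\infty$, the family $\left\{\frac{N(t)-\mathbb{E}[N(t)]}{v(\delta(t))}\sqrt{v(\delta(t))a(t)}:t>0\right\}$ satisfies the large deviation principle with speed $1/a(t)$ and good rate function $\tilde{\Lambda}^*$ given by $\tilde{\Lambda}^*(x)=\frac{x^2}{2\Lambda''(0)}$ if $\Lambda''(0)>0$, and, if $\Lambda''(0)=0$, by $\tilde{\Lambda}^*(0)=0$ and $\tilde{\Lambda}^*(x)=\infty$ for $x\neq0$.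
   Context: A family of real random variables $\{X_t:t>0\}$ satisfies the large deviation principle (LDP) with speed $v_t\to\infty$ and rate function $I$ (a lower semicontinuous map $\mathbb{R}\to[0,\infty]$; good if all level sets $\{I\le\eta\}$ are compact) if $\limsup_{t\to\infty}\frac{1}{v_t}\log P(X_t\in C)\leq-\inf_{x\in C}I(x)$ for all closed $C$ and $\liminf_{t\to\infty}\frac{1}{v_t}\log P(X_t\in O)\geq-\inf_{x\in O}I(x)$ for all open $O$. *)

theory Defs
  imports "HOL-Probability.Probability"
begin

definition elog :: "real \<Rightarrow> ereal" where
  "elog p = (if p > 0 then ereal (ln p) else -\<infinity>)"

definition rate_function :: "(real \<Rightarrow> ereal) \<Rightarrow> bool" where
  "rate_function I \<longleftrightarrow> (\<forall>x. 0 \<le> I x) \<and> (\<forall>x. I x \<le> Liminf (at x) I)"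

definition good_rate_function :: "(real \<Rightarrow> ereal) \<Rightarrow> bool" where
  "good_rate_function I \<longleftrightarrow> rate_function I \<and> (\<forall>\<eta>::real. compact {x. I x \<le> ereal \<eta>})"

definition LDP :: "'a measure \<Rightarrow> (real \<Rightarrow> 'a \<Rightarrow> real) \<Rightarrow> (real \<Rightarrow> real) \<Rightarrow> (real \<Rightarrow> ereal) \<Rightarrow> bool" where
  "LDP M X s I \<longleftrightarrow> rate_function I \<and>
     (\<forall>C. closed C \<longrightarrow>
        Limsup at_top (\<lambda>t. elog (measure M {\<omega> \<in> space M. X t \<omega> \<in> C}) / ereal (s t))
          \<le> - (INF x\<in>C. I x)) \<and>
     (\<forall>U. open U \<longrightarrow>
        Liminf at_top (\<lambda>t. elog (measure M {\<omega> \<in> space M. X t \<omega> \<in> U}) / ereal (s t))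
          \<ge> - (INF x\<in>U. I x))"

definition pser :: "(nat \<Rightarrow> real) \<Rightarrow> real \<Rightarrow> real" where
  "pser c x = (\<Sum>k. c k * x ^ k)"

definition Lam :: "(real \<Rightarrow> real) \<Rightarrow> real \<Rightarrow> real" where
  "Lam \<Delta> \<theta> = \<Delta> (exp \<theta>) - \<Delta> 1"

text \<open>The rate function tilde Lambda^* (given separately for the two cases).\<close>
definition rate_pos :: "real \<Rightarrow> real \<Rightarrow> ereal" where
  "rate_pos L2 x = ereal (x\<^sup>2 / (2 * L2))"

definition rate_zero :: "real \<Rightarrow> ereal" where
  "rate_zero x = (if x = 0 then 0 else \<infinity>)"

end

theory Submission
  imports Defs
begin

lemma mgf_bound_upper:
  fixes M :: "'a measure" and X :: "real \<Rightarrow> 'a \<Rightarrow> real"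
  assumes P: "prob_space M"
    and apos: "\<forall>\<^sub>F t in at_top. a t > 0"
    and int: "\<forall>\<^sub>F t in at_top. integrable M (\<lambda>\<omega>. exp (\<mu> * X t \<omega> / a t))"
    and lim: "((\<lambda>t. a t * ln (integral\<^sup>L M (\<lambda>\<omega>. exp (\<mu> * X t \<omega> / a t)))) \<longlongrightarrow> l) at_top"
    and L: "l < L"
  shows "\<forall>\<^sub>F t in at_top. integral\<^sup>L M (\<lambda>\<omega>. exp (\<mu> * X t \<omega> / a t)) \<le> exp (L / a t)"
proof -
  have ev: "\<forall>\<^sub>F t in at_top. a t * ln (integral\<^sup>L M (\<lambda>\<omega>. exp (\<mu> * X t \<omega> / a t))) < L"
    using lim L by (rule order_tendstoD)
  show ?thesis using ev apos int
  proof eventually_elim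
    case (elim t)
    let ?E = "integral\<^sup>L M (\<lambda>\<omega>. exp (\<mu> * X t \<omega> / a t))"
    have "ln ?E < L / a t" using elim by (simp add: field_simps mult.commute)
    moreover have "?E > 0"
    proof -
      have "?E \<ge> 0" by (rule integral_nonneg_AE) auto
      moreover have "?E \<noteq> 0"
      proof
        assume "?E = 0"
        then have "AE x in M. exp (\<mu> * X t x / a t) = 0"
          using integral_nonneg_eq_0_iff_AE[OF elim(3)] by auto
        then have "AE x in M. False" by simp
        then show False using prob_space.AE_False[OF P] by blast
      qed
      ultimately show ?thesis by linarith
    qed
    ultimately show ?case by (metis exp_le_cancel_iff exp_ln less_imp_le)
  qed
qed


lemma mgf_pos:
  fixes M :: "'a measure" and f :: "'a \<Rightarrow> real"
  assumes P: "prob_space M" and int: "integrable M (\<lambda>\<omega>. exp (f \<omega>))"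
  shows "integral\<^sup>L M (\<lambda>\<omega>. exp (f \<omega>)) > 0"
proof -
  have "integral\<^sup>L M (\<lambda>\<omega>. exp (f \<omega>)) \<ge> 0" by (rule integral_nonneg_AE) auto
  moreover have "integral\<^sup>L M (\<lambda>\<omega>. exp (f \<omega>)) \<noteq> 0"
  proof
    assume "integral\<^sup>L M (\<lambda>\<omega>. exp (f \<omega>)) = 0"
    then have "AE x in M. exp (f x) = 0"
      using integral_nonneg_eq_0_iff_AE[OF int] by auto
    then have "AE x in M. False" by simp
    then show False using prob_space.AE_False[OF P] by blast
  qed
  ultimately show ?thesis by linarith
qed

lemma mgf_bound_lower:
  fixes M :: "'a measure" and X :: "real \<Rightarrow> 'a \<Rightarrow> real"
  assumes P: "prob_space M"
    and apos: "\<forall>\<^sub>F t in at_top. a t > 0"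
    and int: "\<forall>\<^sub>F t in at_top. integrable M (\<lambda>\<omega>. exp (\<mu> * X t \<omega> / a t))"
    and lim: "((\<lambda>t. a t * ln (integral\<^sup>L M (\<lambda>\<omega>. exp (\<mu> * X t \<omega> / a t)))) \<longlongrightarrow> l) at_top"
    and L: "L < l"
  shows "\<forall>\<^sub>F t in at_top. integral\<^sup>L M (\<lambda>\<omega>. exp (\<mu> * X t \<omega> / a t)) \<ge> exp (L / a t)"
proof -
  have ev: "\<forall>\<^sub>F t in at_top. a t * ln (integral\<^sup>L M (\<lambda>\<omega>. exp (\<mu> * X t \<omega> / a t))) > L"
    using lim L by (rule order_tendstoD)
  show ?thesis using ev apos int
  proof eventually_elim
    case (elim t)
    let ?E = "integral\<^sup>L M (\<lambda>\<omega>. exp (\<mu> * X t \<omega> / a t))"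
    have "ln ?E > L / a t" using elim by (simp add: field_simps mult.commute)
    moreover have "?E > 0" using mgf_pos[OF P elim(3)] .
    ultimately show ?case by (metis exp_less_cancel_iff exp_ln less_imp_le)
  qed
qed


lemma exp_ge1_aux: "0 \<le> u \<Longrightarrow> (0::real) < a \<Longrightarrow> 1 \<le> exp (u / a)"
  by simp

lemma tail_bound:
  fixes M :: "'a measure" and X :: "real \<Rightarrow> 'a \<Rightarrow> real"
  assumes P: "prob_space M"
    and meas: "\<forall>\<^sub>F t in at_top. X t \<in> borel_measurable M"
    and apos: "\<forall>\<^sub>F t in at_top. a t > 0"
    and intp: "\<And>\<mu>. \<forall>\<^sub>F t in at_top. integrable M (\<lambda>\<omega>. exp (\<mu> * X t \<omega> / a t))"
    and limp: "\<And>\<mu>. ((\<lambda>t. a t * ln (integral\<^sup>L M (\<lambda>\<omega>. exp (\<mu> * X t \<omega> / a t)))) \<longlongrightarrow> c * \<mu>\<^sup>2 / 2) at_top"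
    and \<rho>: "\<rho> > 0" and lm: "lm > 0" and K: "c * lm\<^sup>2 / 2 - lm * \<rho> < - K"
  shows "\<forall>\<^sub>F t in at_top. measure M {\<omega> \<in> space M. \<rho> \<le> \<bar>X t \<omega>\<bar>} \<le> 2 * exp (- K / a t)"
proof -
  define L where "L = (c * lm\<^sup>2 / 2 + lm * \<rho> - K) / 2"
  have L1: "c * lm\<^sup>2 / 2 < L" and L2: "L - lm * \<rho> < - K" unfolding L_def using K by (auto simp: field_simps)
  have up1: "\<forall>\<^sub>F t in at_top. integral\<^sup>L M (\<lambda>\<omega>. exp (lm * X t \<omega> / a t)) \<le> exp (L / a t)"
    by (rule mgf_bound_upper[OF P apos intp limp L1])
  have L1': "c * (-lm)\<^sup>2 / 2 < L" using L1 by simp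
  have up2: "\<forall>\<^sub>F t in at_top. integral\<^sup>L M (\<lambda>\<omega>. exp ((-lm) * X t \<omega> / a t)) \<le> exp (L / a t)"
    by (rule mgf_bound_upper[OF P apos intp limp L1'])
  show ?thesis using up1 up2 meas apos intp[of lm] intp[of "-lm"]
  proof eventually_elim
    case (elim t)
    let ?S = "{\<omega> \<in> space M. \<rho> \<le> \<bar>X t \<omega>\<bar>}"
    let ?e = "exp (- lm * \<rho> / a t)"
    have Sm: "?S \<in> sets M" using elim(3) by measurable
    have fin: "emeasure M ?S < \<infinity>"
      using P prob_space.emeasure_le_1[OF P, of ?S] by (simp add: order_le_less_trans)
    have "measure M ?S = integral\<^sup>L M (indicator ?S)" using Sm by simp
    also have "\<dots> \<le> integral\<^sup>L M (\<lambda>\<omega>. exp (lm * X t \<omega> / a t) * ?e + exp ((-lm) * X t \<omega> / a t) * ?e)"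
    proof (rule integral_mono)
      show "integrable M (indicator ?S :: 'a \<Rightarrow> real)" using Sm fin by simp
      show "integrable M (\<lambda>\<omega>. exp (lm * X t \<omega> / a t) * ?e + exp ((-lm) * X t \<omega> / a t) * ?e)"
        using elim(5,6) by auto
      fix \<omega> assume "\<omega> \<in> space M"
      show "indicator ?S \<omega> \<le> exp (lm * X t \<omega> / a t) * ?e + exp ((-lm) * X t \<omega> / a t) * ?e"
      proof (cases "\<omega> \<in> ?S")
        case False then show ?thesis by (simp add: add_nonneg_nonneg)
        next
        case True
        then have "\<rho> \<le> X t \<omega> \<or> \<rho> \<le> - X t \<omega>" by auto
        then show ?thesis
        proof
          assume h: "\<rho> \<le> X t \<omega>"
          have "1 \<le> exp ((lm * X t \<omega> - lm * \<rho>) / a t)"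
            using h lm elim(4) by (intro exp_ge1_aux) (auto simp: algebra_simps mult_left_mono)
          also have "\<dots> = exp (lm * X t \<omega> / a t) * ?e" by (simp add: diff_divide_distrib exp_diff exp_minus field_simps)
          finally show ?thesis using True by (simp add: add_increasing2)
        next
          assume h: "\<rho> \<le> - X t \<omega>"
          have "lm * \<rho> \<le> lm * (- X t \<omega>)" using h lm by (intro mult_left_mono) auto
          then have "1 \<le> exp (((-lm) * X t \<omega> - lm * \<rho>) / a t)"
            using elim(4) by (intro exp_ge1_aux) auto
          also have "\<dots> = exp ((-lm) * X t \<omega> / a t) * ?e" by (simp add: diff_divide_distrib exp_diff exp_minus field_simps)
          finally show ?thesis using True by (simp add: add_increasing)
        qed
      qed
    qed
    also have "\<dots> = integral\<^sup>L M (\<lambda>\<omega>. exp (lm * X t \<omega> / a t)) * ?e + integral\<^sup>L M (\<lambda>\<omega>. exp ((-lm) * X t \<omega> / a t)) * ?e"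
      using elim(5,6) by simp
    also have "\<dots> \<le> exp (L / a t) * ?e + exp (L / a t) * ?e"
      using elim(1,2) by (intro add_mono mult_right_mono) auto
    also have "\<dots> = 2 * exp ((L - lm * \<rho>) / a t)" by (simp add: diff_divide_distrib exp_diff exp_minus field_simps)
    also have "\<dots> \<le> 2 * exp (- K / a t)"
    proof -
      have "(L - lm * \<rho>) / a t \<le> (- K) / a t" using L2 elim(4) by (intro divide_right_mono) auto
      then show ?thesis by simp
    qed
    finally show ?case .
  qed
qed


lemma exp_mult_div: "exp (u / a) * exp (w / a) = exp ((u + w) / (a::real))"
  by (simp add: exp_add[symmetric] add_divide_distrib)

lemma tilt_pointwise:
  fixes y x lm \<eta> \<epsilon> a :: real
  assumes a: "a > 0" and \<eta>: "\<eta> \<ge> 0"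
  shows "exp (lm * y / a) \<le> exp ((lm * x + \<bar>lm\<bar> * \<epsilon>) / a) * indicator {z. \<bar>z - x\<bar> < \<epsilon>} y
          + exp ((lm + \<eta>) * y / a) * exp (- \<eta> * (x + \<epsilon>) / a)
          + exp ((lm - \<eta>) * y / a) * exp (\<eta> * (x - \<epsilon>) / a)"
proof -
  have nn: "0 \<le> exp ((lm * x + \<bar>lm\<bar> * \<epsilon>) / a) * indicator {z. \<bar>z - x\<bar> < \<epsilon>} y" by simp
  consider "\<bar>y - x\<bar> < \<epsilon>" | "y \<ge> x + \<epsilon>" | "y \<le> x - \<epsilon>" by linarith
  then show ?thesis
  proof cases
    case 1
    have "lm * (y - x) \<le> \<bar>lm\<bar> * \<epsilon>"
    proof -
      have "lm * (y - x) \<le> \<bar>lm * (y - x)\<bar>" by (rule abs_ge_self)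
      also have "\<dots> = \<bar>lm\<bar> * \<bar>y - x\<bar>" by (rule abs_mult)
      also have "\<dots> \<le> \<bar>lm\<bar> * \<epsilon>" using 1 by (intro mult_left_mono) auto
      finally show ?thesis .
    qed
    then have "lm * y / a \<le> (lm * x + \<bar>lm\<bar> * \<epsilon>) / a" using a by (intro divide_right_mono) (auto simp: algebra_simps)
    then have "exp (lm * y / a) \<le> exp ((lm * x + \<bar>lm\<bar> * \<epsilon>) / a) * indicator {z. \<bar>z - x\<bar> < \<epsilon>} y"
      using 1 by simp
    moreover have "0 \<le> exp ((lm + \<eta>) * y / a) * exp (- \<eta> * (x + \<epsilon>) / a)" by simp
    moreover have "0 \<le> exp ((lm - \<eta>) * y / a) * exp (\<eta> * (x - \<epsilon>) / a)" by simp
    ultimately show ?thesis by linarith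
  next
    case 2
    have "0 \<le> \<eta> * (y - x - \<epsilon>)" using 2 \<eta> by simp
    then have "lm * y / a \<le> (lm * y + \<eta> * (y - x - \<epsilon>)) / a" using a by (intro divide_right_mono) auto
    then have "exp (lm * y / a) \<le> exp ((lm * y + \<eta> * (y - x - \<epsilon>)) / a)" by simp
    also have "\<dots> = exp ((lm + \<eta>) * y / a) * exp (- \<eta> * (x + \<epsilon>) / a)"
      unfolding exp_mult_div by (rule arg_cong[where f=exp]) (simp add: algebra_simps)
    finally have "exp (lm * y / a) \<le> exp ((lm + \<eta>) * y / a) * exp (- \<eta> * (x + \<epsilon>) / a)" .
    moreover have "0 \<le> exp ((lm - \<eta>) * y / a) * exp (\<eta> * (x - \<epsilon>) / a)" by simp
    ultimately show ?thesis using nn by linarith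
  next
    case 3
    have "0 \<le> \<eta> * (x - \<epsilon> - y)" using 3 \<eta> by simp
    then have "lm * y / a \<le> (lm * y + \<eta> * (x - \<epsilon> - y)) / a" using a by (intro divide_right_mono) auto
    then have "exp (lm * y / a) \<le> exp ((lm * y + \<eta> * (x - \<epsilon> - y)) / a)" by simp
    also have "\<dots> = exp ((lm - \<eta>) * y / a) * exp (\<eta> * (x - \<epsilon>) / a)"
      unfolding exp_mult_div by (rule arg_cong[where f=exp]) (simp add: algebra_simps)
    finally have "exp (lm * y / a) \<le> exp ((lm - \<eta>) * y / a) * exp (\<eta> * (x - \<epsilon>) / a)" .
    moreover have "0 \<le> exp ((lm + \<eta>) * y / a) * exp (- \<eta> * (x + \<epsilon>) / a)" by simp
    ultimately show ?thesis using nn by linarith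
  qed
qed


lemma tilt_lower:
  fixes M :: "'a measure" and X :: "real \<Rightarrow> 'a \<Rightarrow> real"
  assumes P: "prob_space M"
    and meas: "\<forall>\<^sub>F t in at_top. X t \<in> borel_measurable M"
    and apos: "\<forall>\<^sub>F t in at_top. a t > 0"
    and alim: "(a \<longlongrightarrow> 0) at_top"
    and intp: "\<And>\<mu>. \<forall>\<^sub>F t in at_top. integrable M (\<lambda>\<omega>. exp (\<mu> * X t \<omega> / a t))"
    and limp: "\<And>\<mu>. ((\<lambda>t. a t * ln (integral\<^sup>L M (\<lambda>\<omega>. exp (\<mu> * X t \<omega> / a t)))) \<longlongrightarrow> c * \<mu>\<^sup>2 / 2) at_top"
    and c: "c > 0" and \<epsilon>: "\<epsilon> > 0"
  shows "\<forall>\<^sub>F t in at_top. measure M {\<omega> \<in> space M. \<bar>X t \<omega> - x\<bar> < \<epsilon>}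
            \<ge> exp ((- (x\<^sup>2 / (2 * c)) - \<epsilon>\<^sup>2 / (8 * c) - \<bar>x / c\<bar> * \<epsilon>) / a t) / 2"
proof -
  define lm where "lm = x / c"
  define \<eta> where "\<eta> = \<epsilon> / c"
  define \<Lambda>0 where "\<Lambda>0 = x\<^sup>2 / (2 * c)"
  define \<gamma> where "\<gamma> = \<epsilon>\<^sup>2 / (2 * c)"
  define L1 where "L1 = (x + \<epsilon>)\<^sup>2 / (2 * c) + \<gamma> / 2"
  define L2 where "L2 = (x - \<epsilon>)\<^sup>2 / (2 * c) + \<gamma> / 2"
  have \<gamma>pos: "\<gamma> > 0" using c \<epsilon> by (simp add: \<gamma>_def)
  have \<eta>pos: "\<eta> \<ge> 0" using c \<epsilon> by (simp add: \<eta>_def)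
  have v0: "c * lm\<^sup>2 / 2 = \<Lambda>0" using c by (simp add: lm_def \<Lambda>0_def power2_eq_square field_simps)
  have v1: "c * (lm + \<eta>)\<^sup>2 / 2 < L1" using c \<gamma>pos
    by (simp add: lm_def \<eta>_def L1_def power2_eq_square field_simps)
  have v2: "c * (lm - \<eta>)\<^sup>2 / 2 < L2" using c \<gamma>pos
    by (simp add: lm_def \<eta>_def L2_def power2_eq_square field_simps)
  have r1: "L1 - \<eta> * (x + \<epsilon>) = \<Lambda>0 - \<gamma> / 2" using c
    by (simp add: L1_def \<eta>_def \<Lambda>0_def \<gamma>_def power2_eq_square field_simps)
  have r2: "L2 + \<eta> * (x - \<epsilon>) = \<Lambda>0 - \<gamma> / 2" using c
    by (simp add: L2_def \<eta>_def \<Lambda>0_def \<gamma>_def power2_eq_square field_simps)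
  have fin: "\<Lambda>0 - \<gamma> / 4 - (lm * x + \<bar>lm\<bar> * \<epsilon>) = - (x\<^sup>2 / (2 * c)) - \<epsilon>\<^sup>2 / (8 * c) - \<bar>x / c\<bar> * \<epsilon>"
    using c by (simp add: lm_def \<Lambda>0_def \<gamma>_def power2_eq_square field_simps)
  have lo0: "\<forall>\<^sub>F t in at_top. integral\<^sup>L M (\<lambda>\<omega>. exp (lm * X t \<omega> / a t)) \<ge> exp ((\<Lambda>0 - \<gamma> / 4) / a t)"
    by (rule mgf_bound_lower[OF P apos intp limp]) (use v0 \<gamma>pos in simp)
  have up1: "\<forall>\<^sub>F t in at_top. integral\<^sup>L M (\<lambda>\<omega>. exp ((lm + \<eta>) * X t \<omega> / a t)) \<le> exp (L1 / a t)"
    by (rule mgf_bound_upper[OF P apos intp limp v1])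
  have up2: "\<forall>\<^sub>F t in at_top. integral\<^sup>L M (\<lambda>\<omega>. exp ((lm - \<eta>) * X t \<omega> / a t)) \<le> exp (L2 / a t)"
    by (rule mgf_bound_upper[OF P apos intp limp v2])
  have small: "\<forall>\<^sub>F t in at_top. a t < \<gamma> / (4 * ln 4)"
    using alim by (rule order_tendstoD) (use \<gamma>pos in simp)
  show ?thesis using lo0 up1 up2 small meas apos intp[of lm] intp[of "lm + \<eta>"] intp[of "lm - \<eta>"]
  proof eventually_elim
    case (elim t)
    let ?S = "{\<omega> \<in> space M. \<bar>X t \<omega> - x\<bar> < \<epsilon>}"
    let ?B = "lm * x + \<bar>lm\<bar> * \<epsilon>"
    let ?e1 = "exp (- \<eta> * (x + \<epsilon>) / a t)"
    let ?e2 = "exp (\<eta> * (x - \<epsilon>) / a t)"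
    have at: "a t > 0" using elim by simp
    have Sm: "?S \<in> sets M" using elim(5) by measurable
    have finS: "emeasure M ?S < \<infinity>"
      using prob_space.emeasure_le_1[OF P, of ?S] by (simp add: order_le_less_trans)
    have intS: "integrable M (indicator ?S :: 'a \<Rightarrow> real)" using Sm finS by simp
    have "integral\<^sup>L M (\<lambda>\<omega>. exp (lm * X t \<omega> / a t)) \<le>
        integral\<^sup>L M (\<lambda>\<omega>. exp (?B / a t) * indicator ?S \<omega>
          + exp ((lm + \<eta>) * X t \<omega> / a t) * ?e1 + exp ((lm - \<eta>) * X t \<omega> / a t) * ?e2)"
    proof (rule integral_mono)
      show "integrable M (\<lambda>\<omega>. exp (lm * X t \<omega> / a t))" using elim(7) .
      show "integrable M (\<lambda>\<omega>. exp (?B / a t) * indicator ?S \<omega>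
          + exp ((lm + \<eta>) * X t \<omega> / a t) * ?e1 + exp ((lm - \<eta>) * X t \<omega> / a t) * ?e2)"
        using elim(8,9) intS by auto
      fix \<omega> assume om: "\<omega> \<in> space M"
      have "indicator ?S \<omega> = (indicator {z. \<bar>z - x\<bar> < \<epsilon>} (X t \<omega>) :: real)"
        using om by (simp add: indicator_def)
      then show "exp (lm * X t \<omega> / a t) \<le> exp (?B / a t) * indicator ?S \<omega>
          + exp ((lm + \<eta>) * X t \<omega> / a t) * ?e1 + exp ((lm - \<eta>) * X t \<omega> / a t) * ?e2"
        using tilt_pointwise[OF at \<eta>pos, of lm "X t \<omega>" x \<epsilon>] by simp
    qed
    also have "\<dots> = exp (?B / a t) * measure M ?S
        + integral\<^sup>L M (\<lambda>\<omega>. exp ((lm + \<eta>) * X t \<omega> / a t)) * ?e1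
        + integral\<^sup>L M (\<lambda>\<omega>. exp ((lm - \<eta>) * X t \<omega> / a t)) * ?e2"
      using elim(8,9) intS Sm by simp
    also have "\<dots> \<le> exp (?B / a t) * measure M ?S + exp (L1 / a t) * ?e1 + exp (L2 / a t) * ?e2"
      using elim(2,3) by (intro add_mono mult_right_mono order.refl) auto
    also have "exp (L1 / a t) * ?e1 = exp ((\<Lambda>0 - \<gamma> / 2) / a t)"
      unfolding exp_mult_div r1[symmetric] by (simp add: algebra_simps)
    also have "exp (L2 / a t) * ?e2 = exp ((\<Lambda>0 - \<gamma> / 2) / a t)"
      unfolding exp_mult_div r2[symmetric] by (simp add: algebra_simps)
    finally have A: "exp ((\<Lambda>0 - \<gamma> / 4) / a t) \<le> exp (?B / a t) * measure M ?S + 2 * exp ((\<Lambda>0 - \<gamma> / 2) / a t)"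
      using elim(1) by linarith
    have "ln 4 < \<gamma> / (4 * a t)" using elim(4) at by (simp add: field_simps)
    then have "exp (ln 4) < exp (\<gamma> / (4 * a t))" by (simp only: exp_less_cancel_iff)
    then have "4 < exp (\<gamma> / (4 * a t))" by simp
    then have "4 * exp (- \<gamma> / (4 * a t)) < 1" by (simp add: exp_minus field_simps)
    moreover have "exp ((\<Lambda>0 - \<gamma> / 2) / a t) = exp ((\<Lambda>0 - \<gamma> / 4) / a t) * exp (- \<gamma> / (4 * a t))"
      using at by (simp add: exp_add[symmetric] field_simps)
    ultimately have "2 * exp ((\<Lambda>0 - \<gamma> / 2) / a t) \<le> exp ((\<Lambda>0 - \<gamma> / 4) / a t) / 2"
    proof -
      assume q: "4 * exp (- \<gamma> / (4 * a t)) < 1"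
        and eq: "exp ((\<Lambda>0 - \<gamma> / 2) / a t) = exp ((\<Lambda>0 - \<gamma> / 4) / a t) * exp (- \<gamma> / (4 * a t))"
      have "exp ((\<Lambda>0 - \<gamma> / 4) / a t) * (4 * exp (- \<gamma> / (4 * a t))) \<le> exp ((\<Lambda>0 - \<gamma> / 4) / a t) * 1"
        using q by (intro mult_left_mono) auto
      then show ?thesis unfolding eq by simp
    qed
    with A have "exp ((\<Lambda>0 - \<gamma> / 4) / a t) / 2 \<le> exp (?B / a t) * measure M ?S" by linarith
    then have "exp ((\<Lambda>0 - \<gamma> / 4) / a t) / 2 * exp (- ?B / a t) \<le> (exp (?B / a t) * measure M ?S) * exp (- ?B / a t)"
      by (rule mult_right_mono) auto
    also have "\<dots> = measure M ?S * (exp (?B / a t) * exp (- ?B / a t))" by (simp only: ac_simps)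
    also have "exp (?B / a t) * exp (- ?B / a t) = 1" by (simp add: exp_add[symmetric] add_divide_distrib[symmetric])
    finally have "exp ((\<Lambda>0 - \<gamma> / 4) / a t) / 2 * exp (- ?B / a t) \<le> measure M ?S" by simp
    moreover have "exp ((\<Lambda>0 - \<gamma> / 4) / a t) / 2 * exp (- ?B / a t) = exp ((\<Lambda>0 - \<gamma> / 4 - ?B) / a t) / 2"
      by (simp add: exp_add[symmetric] diff_divide_distrib add_divide_distrib)
    ultimately show ?case unfolding fin by simp
  qed
qed

lemma br_up:
  assumes a: "a > 0" and p: "0 \<le> p" and h: "p > 0 \<Longrightarrow> a * ln p < r"
  shows "elog p / ereal (1 / a) < ereal r"
proof (cases "p > 0")
  case True
  then have "elog p / ereal (1 / a) = ereal (a * ln p)" using a by (simp add: elog_def)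
  then show ?thesis using h True by simp
next
  case False
  then have "elog p = - \<infinity>" by (simp add: elog_def)
  then show ?thesis using a by simp
qed

lemma br_lo:
  assumes a: "a > 0" and p: "0 < p" and h: "a * ln p > r"
  shows "elog p / ereal (1 / a) > ereal r"
proof -
  have "elog p / ereal (1 / a) = ereal (a * ln p)" using a p by (simp add: elog_def)
  then show ?thesis using h by simp
qed

lemma LDP_from_real:
  fixes M :: "'a measure" and X :: "real \<Rightarrow> 'a \<Rightarrow> real"
  assumes P: "prob_space M" and I: "rate_function I"
    and apos: "\<forall>\<^sub>F t in at_top. a t > 0"
    and UB: "\<And>C r. closed C \<Longrightarrow> ereal r < (INF x\<in>C. I x) \<Longrightarrow>
       \<forall>\<^sub>F t in at_top. measure M {\<omega> \<in> space M. X t \<omega> \<in> C} > 0 \<longrightarrow>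
           a t * ln (measure M {\<omega> \<in> space M. X t \<omega> \<in> C}) < - r"
    and LB: "\<And>U r. open U \<Longrightarrow> (INF x\<in>U. I x) < ereal r \<Longrightarrow>
       \<forall>\<^sub>F t in at_top. measure M {\<omega> \<in> space M. X t \<omega> \<in> U} > 0 \<and>
           a t * ln (measure M {\<omega> \<in> space M. X t \<omega> \<in> U}) > - r"
  shows "LDP M X (\<lambda>t. 1 / a t) I"
  unfolding LDP_def
proof (intro conjI allI impI)
  show "rate_function I" by fact
next
  fix C :: "real set" assume C: "closed C"
  show "Limsup at_top (\<lambda>t. elog (measure M {\<omega> \<in> space M. X t \<omega> \<in> C}) / ereal (1 / a t)) \<le> - (INF x\<in>C. I x)"
    unfolding Limsup_le_iff
  proof (intro allI impI)
    fix y assume y: "- (INF x\<in>C. I x) < y"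
    obtain r' :: real where r': "- (INF x\<in>C. I x) < ereal r'" "ereal r' < y" using ereal_dense2[OF y] by blast
    have "ereal (- r') < (INF x\<in>C. I x)" using r'(1)
      by (metis ereal_minus_less_minus ereal_uminus_uminus uminus_ereal.simps(1))
    from UB[OF C this] apos
    show "\<forall>\<^sub>F t in at_top. elog (measure M {\<omega> \<in> space M. X t \<omega> \<in> C}) / ereal (1 / a t) < y"
    proof eventually_elim
      case (elim t)
      have "elog (measure M {\<omega> \<in> space M. X t \<omega> \<in> C}) / ereal (1 / a t) < ereal r'"
        using elim by (intro br_up) auto
      then show ?case using r'(2) by order
    qed
  qed
next
  fix U :: "real set" assume U: "open U"
  show "- (INF x\<in>U. I x) \<le> Liminf at_top (\<lambda>t. elog (measure M {\<omega> \<in> space M. X t \<omega> \<in> U}) / ereal (1 / a t))"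
    unfolding le_Liminf_iff
  proof (intro allI impI)
    fix y assume y: "y < - (INF x\<in>U. I x)"
    obtain r' :: real where r': "y < ereal r'" "ereal r' < - (INF x\<in>U. I x)" using ereal_dense2[OF y] by blast
    have "(INF x\<in>U. I x) < ereal (- r')" using r'(2)
      by (metis ereal_minus_less_minus ereal_uminus_uminus uminus_ereal.simps(1))
    from LB[OF U this] apos
    show "\<forall>\<^sub>F t in at_top. y < elog (measure M {\<omega> \<in> space M. X t \<omega> \<in> U}) / ereal (1 / a t)"
    proof eventually_elim
      case (elim t)
      have "ereal r' < elog (measure M {\<omega> \<in> space M. X t \<omega> \<in> U}) / ereal (1 / a t)"
        using elim by (intro br_lo) auto
      then show ?case using r'(1) by order
    qed
  qed
qed

lemma tail_to_ln:
  fixes a p :: "real \<Rightarrow> real"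
  assumes apos: "\<forall>\<^sub>F t in at_top. a t > 0" and alim: "(a \<longlongrightarrow> 0) at_top"
    and bnd: "\<forall>\<^sub>F t in at_top. p t \<le> 2 * exp (- K / a t)" and rK: "r < K"
  shows "\<forall>\<^sub>F t in at_top. p t > 0 \<longrightarrow> a t * ln (p t) < - r"
proof -
  have small: "\<forall>\<^sub>F t in at_top. a t < (K - r) / (2 * ln 2)"
    using alim by (rule order_tendstoD) (use rK in simp)
  show ?thesis using apos bnd small
  proof eventually_elim
    case (elim t)
    show ?case
    proof
      assume p: "p t > 0"
      have "ln (p t) \<le> ln (2 * exp (- K / a t))" using p elim by simp
      also have "\<dots> = ln 2 - K / a t" by (simp add: ln_mult)
      finally have "a t * ln (p t) \<le> a t * (ln 2 - K / a t)" using elim(1) by (simp add: mult_left_mono)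
      also have "\<dots> = a t * ln 2 - K" using elim(1) by (simp add: field_simps)
      finally have A: "a t * ln (p t) \<le> a t * ln 2 - K" .
      have "a t * ln 2 < (K - r) / 2" using elim(1,3) by (simp add: field_simps)
      then show "a t * ln (p t) < - r" using A rK by argo
    qed
  qed
qed

lemma lower_to_ln:
  fixes a p :: "real \<Rightarrow> real"
  assumes apos: "\<forall>\<^sub>F t in at_top. a t > 0" and alim: "(a \<longlongrightarrow> 0) at_top"
    and bnd: "\<forall>\<^sub>F t in at_top. exp (- K / a t) / 2 \<le> p t" and rK: "K < r"
  shows "\<forall>\<^sub>F t in at_top. p t > 0 \<and> a t * ln (p t) > - r"
proof -
  have small: "\<forall>\<^sub>F t in at_top. a t < (r - K) / (2 * ln 2)"
    using alim by (rule order_tendstoD) (use rK in simp)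
  show ?thesis using apos bnd small
  proof eventually_elim
    case (elim t)
    have pos: "exp (- K / a t) / 2 > 0" by simp
    then have p: "p t > 0" using elim(2) by linarith
    have "ln (exp (- K / a t) / 2) \<le> ln (p t)" using pos p elim(2) by (subst ln_le_cancel_iff) auto
    moreover have "ln (exp (- K / a t) / 2) = - K / a t - ln 2" by (simp add: ln_div)
    ultimately have "a t * (- K / a t - ln 2) \<le> a t * ln (p t)" using elim(1) by (simp add: mult_left_mono)
    moreover have "a t * (- K / a t - ln 2) = - K - a t * ln 2" using elim(1) by (simp add: field_simps)
    moreover have "a t * ln 2 < (r - K) / 2" using elim(1,3) by (simp add: field_simps)
    ultimately show ?case using p rK by argo
  qed
qed

lemma rate_pos_rf: assumes c: "c > 0" shows "rate_function (rate_pos c)"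
  unfolding rate_function_def
proof (intro conjI allI)
  fix x show "0 \<le> rate_pos c x" using c by (simp add: rate_pos_def)
next
  fix x
  have "((\<lambda>y. ereal (y\<^sup>2 / (2 * c))) \<longlongrightarrow> ereal (x\<^sup>2 / (2 * c))) (at x)"
    using c by (intro tendsto_intros) auto
  then have "Liminf (at x) (rate_pos c) = rate_pos c x"
    unfolding rate_pos_def by (intro lim_imp_Liminf) auto
  then show "rate_pos c x \<le> Liminf (at x) (rate_pos c)" by simp
qed

lemma rate_pos_good: assumes c: "c > 0" shows "good_rate_function (rate_pos c)"
  unfolding good_rate_function_def
proof (intro conjI allI)
  show "rate_function (rate_pos c)" using rate_pos_rf[OF c] .
next
  fix \<eta> :: real
  have eq: "{x. rate_pos c x \<le> ereal \<eta>} = {x. x\<^sup>2 / (2 * c) \<le> \<eta>}" by (simp add: rate_pos_def)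
  have cl: "closed {x::real. x\<^sup>2 / (2 * c) \<le> \<eta>}"
    using c by (intro closed_Collect_le continuous_intros) auto
  have bd: "bounded {x::real. x\<^sup>2 / (2 * c) \<le> \<eta>}"
    unfolding bounded_iff
  proof (intro exI ballI)
    fix x :: real assume "x \<in> {x. x\<^sup>2 / (2 * c) \<le> \<eta>}"
    then have x2: "x\<^sup>2 \<le> 2 * c * \<eta>" using c by (simp add: field_simps)
    show "norm x \<le> max 1 (2 * c * \<eta>)"
    proof (cases "\<bar>x\<bar> \<le> 1")
      case True then show ?thesis by simp
    next
      case False
      then have "\<bar>x\<bar> \<le> \<bar>x\<bar> * \<bar>x\<bar>" by (intro mult_le_cancel_left1[THEN iffD2]) auto
      also have "\<dots> = x\<^sup>2" by (simp add: power2_eq_square abs_mult[symmetric])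
      finally show ?thesis using x2 by simp
    qed
  qed
  show "compact {x. rate_pos c x \<le> ereal \<eta>}" unfolding eq using cl bd
    by (simp add: compact_eq_bounded_closed)
qed

lemma rate_zero_rf: "rate_function rate_zero"
  unfolding rate_function_def
proof (intro conjI allI)
  fix x show "0 \<le> rate_zero x" by (simp add: rate_zero_def)
next
  fix x :: real
  show "rate_zero x \<le> Liminf (at x) rate_zero"
  proof (cases "x = 0")
    case True
    have "0 \<le> Liminf (at x) rate_zero" by (intro Liminf_bounded) (simp add: rate_zero_def)
    then show ?thesis using True by (simp add: rate_zero_def)
  next
    case False
    have "\<forall>\<^sub>F y in at x. y \<noteq> 0"
      using tendsto_imp_eventually_ne[OF tendsto_ident_at False] .
    then have "\<forall>\<^sub>F y in at x. \<infinity> \<le> rate_zero y" by eventually_elim (simp add: rate_zero_def)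
    then have "\<infinity> \<le> Liminf (at x) rate_zero" by (rule Liminf_bounded)
    then show ?thesis by simp
  qed
qed

lemma rate_zero_good: "good_rate_function rate_zero"
  unfolding good_rate_function_def
proof (intro conjI allI)
  show "rate_function rate_zero" by (rule rate_zero_rf)
next
  fix \<eta> :: real
  have "{x. rate_zero x \<le> ereal \<eta>} = (if 0 \<le> \<eta> then {0} else {})"
    by (auto simp: rate_zero_def)
  then show "compact {x. rate_zero x \<le> ereal \<eta>}" by simp
qed

lemma UB_trivial:
  fixes M :: "'a measure" and a :: "real \<Rightarrow> real"
  assumes P: "prob_space M" and apos: "\<forall>\<^sub>F t in at_top. a t > 0" and r: "r < 0"
  shows "\<forall>\<^sub>F t in at_top. measure M (S t) > 0 \<longrightarrow> a t * ln (measure M (S t)) < - r"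
  using apos
proof eventually_elim
  case (elim t)
  show ?case
  proof
    assume p: "measure M (S t) > 0"
    have "measure M (S t) \<le> 1" using prob_space.prob_le_1[OF P] .
    then have "ln (measure M (S t)) \<le> 0" using p by simp
    then have "a t * ln (measure M (S t)) \<le> 0" using elim by (simp add: mult_nonneg_nonpos)
    then show "a t * ln (measure M (S t)) < - r" using r by linarith
  qed
qed

lemma GE_pos:
  fixes M :: "'a measure" and X :: "real \<Rightarrow> 'a \<Rightarrow> real"
  assumes P: "prob_space M"
    and meas: "\<forall>\<^sub>F t in at_top. X t \<in> borel_measurable M"
    and apos: "\<forall>\<^sub>F t in at_top. a t > 0"
    and alim: "(a \<longlongrightarrow> 0) at_top"
    and intp: "\<And>\<mu>. \<forall>\<^sub>F t in at_top. integrable M (\<lambda>\<omega>. exp (\<mu> * X t \<omega> / a t))"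
    and limp: "\<And>\<mu>. ((\<lambda>t. a t * ln (integral\<^sup>L M (\<lambda>\<omega>. exp (\<mu> * X t \<omega> / a t)))) \<longlongrightarrow> c * \<mu>\<^sup>2 / 2) at_top"
    and c: "c > 0"
  shows "LDP M X (\<lambda>t. 1 / a t) (rate_pos c)"
proof (rule LDP_from_real[OF P rate_pos_rf[OF c] apos])
  have FM: "finite_measure M" using P by (simp add: prob_space_def)
  fix C r assume C: "closed C" and rC: "ereal r < (INF x\<in>C. rate_pos c x)"
  show "\<forall>\<^sub>F t in at_top. measure M {\<omega> \<in> space M. X t \<omega> \<in> C} > 0 \<longrightarrow>
           a t * ln (measure M {\<omega> \<in> space M. X t \<omega> \<in> C}) < - r"
  proof (cases "r < 0")
    case True then show ?thesis by (rule UB_trivial[OF P apos])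
  next
    case False
    obtain r2 :: real where r2: "ereal r < ereal r2" "ereal r2 < (INF x\<in>C. rate_pos c x)"
      using ereal_dense2[OF rC] by blast
    have rr2: "r < r2" using r2(1) by simp
    have r2pos: "r2 > 0" using False rr2 by linarith
    define \<rho> where "\<rho> = sqrt (2 * c * r2)"
    have \<rho>pos: "\<rho> > 0" using c r2pos by (simp add: \<rho>_def)
    have \<rho>2: "\<rho>\<^sup>2 = 2 * c * r2" using c r2pos by (simp add: \<rho>_def)
    have inC: "\<rho> < \<bar>x\<bar>" if "x \<in> C" for x
    proof -
      have "ereal r2 < rate_pos c x" using r2(2) that by (meson INF_lower order_less_le_trans)
      then have "r2 < x\<^sup>2 / (2 * c)" by (simp add: rate_pos_def)
      then have "\<rho>\<^sup>2 < \<bar>x\<bar>\<^sup>2" using c \<rho>2 by (simp add: field_simps)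
      then show ?thesis by (rule power2_less_imp_less) simp
    qed
    define K where "K = (r + r2) / 2"
    have Kc: "c * (\<rho> / c)\<^sup>2 / 2 - \<rho> / c * \<rho> < - K"
    proof -
      have "c * (\<rho> / c)\<^sup>2 / 2 - \<rho> / c * \<rho> = - (\<rho>\<^sup>2 / (2 * c))" using c
        by (simp add: power2_eq_square field_simps)
      also have "\<dots> = - r2" using \<rho>2 c by simp
      finally show ?thesis using rr2 by (simp add: K_def)
    qed
    have tb: "\<forall>\<^sub>F t in at_top. measure M {\<omega> \<in> space M. \<rho> \<le> \<bar>X t \<omega>\<bar>} \<le> 2 * exp (- K / a t)"
      by (rule tail_bound[OF P meas apos intp limp \<rho>pos _ Kc]) (use \<rho>pos c in simp)
    have "\<forall>\<^sub>F t in at_top. measure M {\<omega> \<in> space M. X t \<omega> \<in> C} \<le> 2 * exp (- K / a t)"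
      using tb meas
    proof eventually_elim
      case (elim t)
      have "measure M {\<omega> \<in> space M. X t \<omega> \<in> C} \<le> measure M {\<omega> \<in> space M. \<rho> \<le> \<bar>X t \<omega>\<bar>}"
        using elim(2) inC by (intro finite_measure.finite_measure_mono[OF FM]) (auto intro: less_imp_le)
      then show ?case using elim(1) by linarith
    qed
    then show ?thesis by (rule tail_to_ln[OF apos alim]) (simp add: K_def rr2)
  qed
next
  have FM: "finite_measure M" using P by (simp add: prob_space_def)
  fix U r assume U: "open U" and rU: "(INF x\<in>U. rate_pos c x) < ereal r"
  obtain x where xU: "x \<in> U" and xr: "rate_pos c x < ereal r" using rU by (auto simp: INF_less_iff)
  have xr': "x\<^sup>2 / (2 * c) < r" using xr by (simp add: rate_pos_def)
  obtain e where e: "e > 0" "ball x e \<subseteq> U" using U xU by (auto simp: open_contains_ball)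
  define \<delta>0 where "\<delta>0 = r - x\<^sup>2 / (2 * c)"
  have \<delta>0: "\<delta>0 > 0" using xr' by (simp add: \<delta>0_def)
  define K0 where "K0 = 1 / (8 * c) + \<bar>x / c\<bar>"
  have K0: "K0 > 0" using c by (simp add: K0_def add_pos_nonneg)
  define \<epsilon> where "\<epsilon> = min (min e 1) (\<delta>0 / (2 * K0))"
  have \<epsilon>pos: "\<epsilon> > 0" using e \<delta>0 K0 by (simp add: \<epsilon>_def)
  have \<epsilon>e: "\<epsilon> \<le> e" and \<epsilon>1: "\<epsilon> \<le> 1" and \<epsilon>3: "\<epsilon> \<le> \<delta>0 / (2 * K0)"
    by (auto simp: \<epsilon>_def)
  have "\<epsilon> * K0 \<le> \<delta>0 / (2 * K0) * K0" using \<epsilon>3 K0 by (intro mult_right_mono) auto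
  then have \<epsilon>K: "\<epsilon> * K0 \<le> \<delta>0 / 2" using K0 by simp
  have "\<epsilon>\<^sup>2 \<le> \<epsilon>" using \<epsilon>1 \<epsilon>pos by (simp add: power2_eq_square mult_le_cancel_left1)
  then have "\<epsilon>\<^sup>2 / (8 * c) \<le> \<epsilon> / (8 * c)" using c by (intro divide_right_mono) auto
  then have sm: "\<epsilon>\<^sup>2 / (8 * c) + \<bar>x / c\<bar> * \<epsilon> \<le> \<delta>0 / 2" using \<epsilon>K by (simp add: K0_def field_simps)
  define K where "K = x\<^sup>2 / (2 * c) + \<epsilon>\<^sup>2 / (8 * c) + \<bar>x / c\<bar> * \<epsilon>"
  have Kr: "K < r" using sm \<delta>0 by (simp add: K_def \<delta>0_def)
  have tl: "\<forall>\<^sub>F t in at_top. measure M {\<omega> \<in> space M. \<bar>X t \<omega> - x\<bar> < \<epsilon>}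
            \<ge> exp ((- (x\<^sup>2 / (2 * c)) - \<epsilon>\<^sup>2 / (8 * c) - \<bar>x / c\<bar> * \<epsilon>) / a t) / 2"
    by (rule tilt_lower[OF P meas apos alim intp limp c \<epsilon>pos])
  have "\<forall>\<^sub>F t in at_top. exp (- K / a t) / 2 \<le> measure M {\<omega> \<in> space M. X t \<omega> \<in> U}"
    using tl meas
  proof eventually_elim
    case (elim t)
    have Um: "U \<in> sets borel" using U by simp
    have "measure M {\<omega> \<in> space M. \<bar>X t \<omega> - x\<bar> < \<epsilon>} \<le> measure M {\<omega> \<in> space M. X t \<omega> \<in> U}"
    proof (intro finite_measure.finite_measure_mono[OF FM])
      show "{\<omega> \<in> space M. \<bar>X t \<omega> - x\<bar> < \<epsilon>} \<subseteq> {\<omega> \<in> space M. X t \<omega> \<in> U}"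
        using e(2) \<epsilon>e by (auto simp: ball_def dist_real_def subset_iff abs_minus_commute)
      show "{\<omega> \<in> space M. X t \<omega> \<in> U} \<in> sets M" using elim(2) Um by measurable
    qed
    moreover have "- K / a t = (- (x\<^sup>2 / (2 * c)) - \<epsilon>\<^sup>2 / (8 * c) - \<bar>x / c\<bar> * \<epsilon>) / a t"
      by (simp add: K_def)
    ultimately show ?case using elim(1) by simp
  qed
  then show "\<forall>\<^sub>F t in at_top. measure M {\<omega> \<in> space M. X t \<omega> \<in> U} > 0 \<and>
           a t * ln (measure M {\<omega> \<in> space M. X t \<omega> \<in> U}) > - r"
    by (rule lower_to_ln[OF apos alim _ Kr])
qed


lemma GE_zero:
  fixes M :: "'a measure" and X :: "real \<Rightarrow> 'a \<Rightarrow> real"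
  assumes P: "prob_space M"
    and meas: "\<forall>\<^sub>F t in at_top. X t \<in> borel_measurable M"
    and apos: "\<forall>\<^sub>F t in at_top. a t > 0"
    and alim: "(a \<longlongrightarrow> 0) at_top"
    and intp: "\<And>\<mu>. \<forall>\<^sub>F t in at_top. integrable M (\<lambda>\<omega>. exp (\<mu> * X t \<omega> / a t))"
    and limp: "\<And>\<mu>. ((\<lambda>t. a t * ln (integral\<^sup>L M (\<lambda>\<omega>. exp (\<mu> * X t \<omega> / a t)))) \<longlongrightarrow> 0 * \<mu>\<^sup>2 / 2) at_top"
  shows "LDP M X (\<lambda>t. 1 / a t) rate_zero"
proof (rule LDP_from_real[OF P rate_zero_rf apos])
  have FM: "finite_measure M" using P by (simp add: prob_space_def)
  fix C r assume C: "closed C" and rC: "ereal r < (INF x\<in>C. rate_zero x)"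
  show "\<forall>\<^sub>F t in at_top. measure M {\<omega> \<in> space M. X t \<omega> \<in> C} > 0 \<longrightarrow>
           a t * ln (measure M {\<omega> \<in> space M. X t \<omega> \<in> C}) < - r"
  proof (cases "r < 0")
    case True then show ?thesis by (rule UB_trivial[OF P apos])
  next
    case False
    have "0 \<notin> C"
    proof
      assume "0 \<in> C"
      then have "(INF x\<in>C. rate_zero x) \<le> rate_zero 0" by (rule INF_lower)
      then have "ereal r < rate_zero 0" using rC by order
      then show False using False by (simp add: rate_zero_def)
    qed
    then have "0 \<in> - C" by simp
    moreover have "open (- C)" using C by auto
    ultimately obtain \<rho> where \<rho>: "\<rho> > 0" "ball 0 \<rho> \<subseteq> - C" by (auto simp: open_contains_ball)
    have inC: "\<rho> \<le> \<bar>x\<bar>" if "x \<in> C" for x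
      using \<rho>(2) that by (force simp: ball_def dist_real_def subset_iff)
    define K where "K = r + 1 / 2"
    have Kc: "0 * ((r + 1) / \<rho>)\<^sup>2 / 2 - (r + 1) / \<rho> * \<rho> < - K"
      using \<rho> by (simp add: K_def)
    have tb: "\<forall>\<^sub>F t in at_top. measure M {\<omega> \<in> space M. \<rho> \<le> \<bar>X t \<omega>\<bar>} \<le> 2 * exp (- K / a t)"
      by (rule tail_bound[OF P meas apos intp limp \<rho>(1) _ Kc]) (use \<rho> False in simp)
    have "\<forall>\<^sub>F t in at_top. measure M {\<omega> \<in> space M. X t \<omega> \<in> C} \<le> 2 * exp (- K / a t)"
      using tb meas
    proof eventually_elim
      case (elim t)
      have "measure M {\<omega> \<in> space M. X t \<omega> \<in> C} \<le> measure M {\<omega> \<in> space M. \<rho> \<le> \<bar>X t \<omega>\<bar>}"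
        using elim(2) inC by (intro finite_measure.finite_measure_mono[OF FM]) auto
      then show ?case using elim(1) by linarith
    qed
    then show ?thesis by (rule tail_to_ln[OF apos alim]) (simp add: K_def)
  qed
next
  have FM: "finite_measure M" using P by (simp add: prob_space_def)
  fix U r assume U: "open U" and rU: "(INF x\<in>U. rate_zero x) < ereal r"
  obtain x where xU: "x \<in> U" and xr: "rate_zero x < ereal r" using rU by (auto simp: INF_less_iff)
  have x0: "x = 0" and r0: "0 < r" using xr by (auto simp: rate_zero_def split: if_splits)
  obtain e where e: "e > 0" "ball 0 e \<subseteq> U" using U xU x0 by (auto simp: open_contains_ball)
  have Kc: "0 * (2 / e)\<^sup>2 / 2 - 2 / e * e < - 1" using e by simp
  have tb: "\<forall>\<^sub>F t in at_top. measure M {\<omega> \<in> space M. e \<le> \<bar>X t \<omega>\<bar>} \<le> 2 * exp (- 1 / a t)"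
    by (rule tail_bound[OF P meas apos intp limp e(1) _ Kc]) (use e in simp)
  have small: "\<forall>\<^sub>F t in at_top. a t < 1 / ln 4"
    using alim by (rule order_tendstoD) simp
  have "\<forall>\<^sub>F t in at_top. exp (- (r / 2) / a t) / 2 \<le> measure M {\<omega> \<in> space M. X t \<omega> \<in> U}"
    using tb meas small apos
  proof eventually_elim
    case (elim t)
    have Um: "U \<in> sets borel" using U by simp
    have Sm: "{\<omega> \<in> space M. e \<le> \<bar>X t \<omega>\<bar>} \<in> sets M" using elim(2) by measurable
    have "ln 4 < 1 / a t" using elim(3,4) by (simp add: field_simps)
    then have "exp (ln 4) < exp (1 / a t)" by (simp only: exp_less_cancel_iff)
    then have "4 < exp (1 / a t)" by simp
    then have "2 * exp (- 1 / a t) < 1 / 2" by (simp add: exp_minus field_simps)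
    then have "measure M {\<omega> \<in> space M. e \<le> \<bar>X t \<omega>\<bar>} \<le> 1 / 2" using elim(1) by linarith
    moreover have "measure M (space M - {\<omega> \<in> space M. e \<le> \<bar>X t \<omega>\<bar>}) = 1 - measure M {\<omega> \<in> space M. e \<le> \<bar>X t \<omega>\<bar>}"
      using prob_space.prob_compl[OF P Sm] .
    moreover have "measure M (space M - {\<omega> \<in> space M. e \<le> \<bar>X t \<omega>\<bar>}) \<le> measure M {\<omega> \<in> space M. X t \<omega> \<in> U}"
    proof (intro finite_measure.finite_measure_mono[OF FM])
      show "space M - {\<omega> \<in> space M. e \<le> \<bar>X t \<omega>\<bar>} \<subseteq> {\<omega> \<in> space M. X t \<omega> \<in> U}"
        using e(2) by (auto simp: ball_def dist_real_def subset_iff)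
      show "{\<omega> \<in> space M. X t \<omega> \<in> U} \<in> sets M" using elim(2) Um by measurable
    qed
    moreover have "exp (- (r / 2) / a t) \<le> 1" using r0 elim(4) by simp
    ultimately show ?case by linarith
  qed
  then show "\<forall>\<^sub>F t in at_top. measure M {\<omega> \<in> space M. X t \<omega> \<in> U} > 0 \<and>
           a t * ln (measure M {\<omega> \<in> space M. X t \<omega> \<in> U}) > - r"
    by (rule lower_to_ln[OF apos alim]) (use r0 in simp)
qed

lemma expect_nat:
  fixes M :: "'a measure" and N :: "'a \<Rightarrow> nat" and f :: "nat \<Rightarrow> real"
  assumes P: "prob_space M" and Nm: "N \<in> measurable M (count_space UNIV)"
    and f0: "\<And>k. f k \<ge> 0"
    and sm: "summable (\<lambda>k. f k * measure M {\<omega> \<in> space M. N \<omega> = k})"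
  shows "integrable M (\<lambda>\<omega>. f (N \<omega>)) \<and>
         integral\<^sup>L M (\<lambda>\<omega>. f (N \<omega>)) = (\<Sum>k. f k * measure M {\<omega> \<in> space M. N \<omega> = k})"
proof -
  interpret prob_space M by (rule P)
  let ?p = "\<lambda>k. measure M {\<omega> \<in> space M. N \<omega> = k}"
  have fm: "(\<lambda>\<omega>. f (N \<omega>)) \<in> borel_measurable M"
    using Nm by (intro measurable_compose[OF Nm]) simp
  have setm: "{\<omega> \<in> space M. N \<omega> = k} \<in> sets M" for k
    using Nm by measurable
  have pw: "ennreal (f (N \<omega>)) = (\<Sum>k. ennreal (f k) * indicator {\<omega> \<in> space M. N \<omega> = k} \<omega>)"
    if "\<omega> \<in> space M" for \<omega>
  proof -
    have "(\<Sum>k. ennreal (f k) * indicator {\<omega> \<in> space M. N \<omega> = k} \<omega>)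
        = (\<Sum>k\<in>{N \<omega>}. ennreal (f k) * indicator {\<omega> \<in> space M. N \<omega> = k} \<omega>)"
      by (rule suminf_finite) (auto simp: indicator_def)
    also have "\<dots> = ennreal (f (N \<omega>))" using that by (simp add: indicator_def)
    finally show ?thesis by simp
  qed
  have "(\<integral>\<^sup>+ \<omega>. ennreal (f (N \<omega>)) \<partial>M)
      = (\<integral>\<^sup>+ \<omega>. (\<Sum>k. ennreal (f k) * indicator {\<omega> \<in> space M. N \<omega> = k} \<omega>) \<partial>M)"
    using pw by (intro nn_integral_cong) auto
  also have "\<dots> = (\<Sum>k. \<integral>\<^sup>+ \<omega>. ennreal (f k) * indicator {\<omega> \<in> space M. N \<omega> = k} \<omega> \<partial>M)"
    using setm Nm by (intro nn_integral_suminf) measurable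
  also have "\<dots> = (\<Sum>k. ennreal (f k * ?p k))"
    using setm by (simp add: nn_integral_cmult_indicator emeasure_eq_measure ennreal_mult f0)
  also have "\<dots> = ennreal (\<Sum>k. f k * ?p k)"
    using sm f0 by (intro suminf_ennreal2) auto
  finally have nn: "(\<integral>\<^sup>+ \<omega>. ennreal (f (N \<omega>)) \<partial>M) = ennreal (\<Sum>k. f k * ?p k)" .
  have int: "integrable M (\<lambda>\<omega>. f (N \<omega>))"
    by (rule integrableI_nn_integral_finite[OF fm _ nn]) (simp add: f0)
  have "integral\<^sup>L M (\<lambda>\<omega>. f (N \<omega>)) = enn2real (\<integral>\<^sup>+ \<omega>. ennreal (f (N \<omega>)) \<partial>M)"
    by (rule integral_eq_nn_integral[OF fm]) (simp add: f0)
  also have "\<dots> = (\<Sum>k. f k * ?p k)" unfolding nn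
    using sm f0 by (intro enn2real_ennreal suminf_nonneg) auto
  finally show ?thesis using int by simp
qed

lemma taylor_lhopital:
  fixes f f' :: "real \<Rightarrow> real"
  assumes d: "\<And>\<theta>. (f has_real_derivative f' \<theta>) (at \<theta>)"
    and d2: "(f' has_real_derivative L2) (at 0)" and f0: "f 0 = 0"
  shows "((\<lambda>\<theta>. (f \<theta> - f' 0 * \<theta>) / \<theta>\<^sup>2) \<longlongrightarrow> L2 / 2) (at 0)"
proof (rule lhopital[where f' = "\<lambda>\<theta>. f' \<theta> - f' 0" and g' = "\<lambda>\<theta>. 2 * \<theta>"])
  have "isCont (\<lambda>\<theta>. f \<theta> - f' 0 * \<theta>) 0"
    using DERIV_isCont[OF d[of 0]] by (intro continuous_intros) auto
  then show "((\<lambda>\<theta>. f \<theta> - f' 0 * \<theta>) \<longlongrightarrow> 0) (at 0)"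
    using f0 by (simp add: isCont_def)
  show "((\<lambda>\<theta>::real. \<theta>\<^sup>2) \<longlongrightarrow> 0) (at 0)"
    by (rule tendsto_eq_intros refl | simp)+
  have ne: "\<forall>\<^sub>F \<theta> in at (0::real). \<theta> \<noteq> 0" by (simp add: eventually_at_filter)
  show "\<forall>\<^sub>F \<theta> in at (0::real). \<theta>\<^sup>2 \<noteq> 0" using ne by eventually_elim simp
  show "\<forall>\<^sub>F \<theta> in at (0::real). 2 * \<theta> \<noteq> 0" using ne by eventually_elim simp
  show "\<forall>\<^sub>F \<theta> in at 0. ((\<lambda>\<theta>. f \<theta> - f' 0 * \<theta>) has_real_derivative f' \<theta> - f' 0) (at \<theta>)"
    by (intro always_eventually allI derivative_eq_intros d) (auto intro: d)
  show "\<forall>\<^sub>F \<theta> in at 0. ((\<lambda>\<theta>. \<theta>\<^sup>2) has_real_derivative 2 * \<theta>) (at \<theta>)"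
    by (intro always_eventually allI derivative_eq_intros) auto
  have "((\<lambda>y. (f' y - f' 0) / (y - 0)) \<longlongrightarrow> L2) (at 0)"
    using d2 by (simp add: has_field_derivative_iff)
  then have "((\<lambda>y. (f' y - f' 0) / y / 2) \<longlongrightarrow> L2 / 2) (at 0)"
    by (intro tendsto_divide) auto
  then show "((\<lambda>\<theta>. (f' \<theta> - f' 0) / (2 * \<theta>)) \<longlongrightarrow> L2 / 2) (at 0)"
    by (simp add: field_simps)
qed

lemma term_le_suminf:
  fixes f :: "nat \<Rightarrow> real"
  assumes "summable f" "\<And>i. 0 \<le> f i"
  shows "f m \<le> suminf f"
  using sum_le_suminf[OF assms(1), of "{m}"] assms(2) by simp

lemma ratio_to_zero:
  fixes dd :: "nat \<Rightarrow> real"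
  assumes dd0: "\<And>k. dd k \<ge> 0" and sm: "\<And>x. x > 0 \<Longrightarrow> summable (\<lambda>k. dd k * x ^ k)"
    and unb: "\<And>m. \<exists>j>m. dd j > 0"
  shows "((\<lambda>y. dd k * y ^ k / pser dd y) \<longlongrightarrow> 0) at_top"
proof -
  obtain m where m: "m > k" "dd m > 0" using unb by blast
  have g: "((\<lambda>y::real. (dd k / dd m) / y ^ (m - k)) \<longlongrightarrow> 0) at_top"
    by (intro tendsto_divide_0[OF tendsto_const] filterlim_at_top_imp_at_infinity
        filterlim_pow_at_top filterlim_ident) (use m in auto)
  show ?thesis
  proof (rule Lim_null_comparison[OF _ g])
    show "\<forall>\<^sub>F y in at_top. norm (dd k * y ^ k / pser dd y) \<le> dd k / dd m / y ^ (m - k)"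
      using eventually_gt_at_top[of "0::real"]
    proof eventually_elim
      case (elim y)
      have Dm: "dd m * y ^ m \<le> pser dd y"
        unfolding pser_def using sm[OF elim] dd0 elim by (intro term_le_suminf) auto
      have pos: "dd m * y ^ m > 0" using m elim by simp
      have "norm (dd k * y ^ k / pser dd y) = dd k * y ^ k / pser dd y"
        using dd0[of k] elim pos Dm by simp
      also have "\<dots> \<le> dd k * y ^ k / (dd m * y ^ m)"
        using pos Dm dd0[of k] elim by (intro divide_left_mono) auto
      also have "\<dots> = dd k / dd m / y ^ (m - k)"
      proof -
        have "y ^ m = y ^ k * y ^ (m - k)" using m by (simp add: power_add[symmetric])
        then show ?thesis using elim m by (simp add: field_simps)
      qed
      finally show ?case .
    qed
  qed
qed


lemma G_sandwich:
  fixes g h :: "nat \<Rightarrow> real"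
  assumes eq: "\<And>k. k \<ge> n \<Longrightarrow> g k = h k" and sh: "summable h"
    and g0: "\<And>k. 0 \<le> g k" and le: "\<And>k. k < n \<Longrightarrow> g k \<le> h k"
  shows "summable g" and "suminf h - (\<Sum>k<n. h k) \<le> suminf g" and "suminf g \<le> suminf h"
proof -
  have ev: "\<forall>\<^sub>F k in sequentially. g k = h k"
    using eq by (auto simp: eventually_sequentially)
  show sg: "summable g" using summable_cong[OF ev] sh by simp
  have gh: "g k \<le> h k" for k using eq le by (cases "k < n") auto
  show "suminf g \<le> suminf h" by (rule suminf_le[OF gh sg sh])
  have "suminf h - (\<Sum>k<n. h k) = (\<Sum>k. h (k + n))" using suminf_minus_initial_segment[OF sh] by simp
  also have "\<dots> = (\<Sum>k. g (k + n))" using eq by (intro suminf_cong) auto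
  also have "\<dots> = suminf g - (\<Sum>k<n. g k)" using suminf_minus_initial_segment[OF sg] by simp
  also have "\<dots> \<le> suminf g" using g0 by (simp add: sum_nonneg)
  finally show "suminf h - (\<Sum>k<n. h k) \<le> suminf g" .
qed

lemma ln_sandwich:
  fixes G Z :: real
  assumes "Z > 0" "Z / 2 \<le> G" "G \<le> Z"
  shows "\<bar>ln G - ln Z\<bar> \<le> ln 2"
proof -
  have G: "G > 0" using assms by simp
  have "ln G \<le> ln Z" using assms G by simp
  moreover have "ln (Z / 2) \<le> ln G" using assms G by (subst ln_le_cancel_iff) auto
  moreover have "ln (Z / 2) = ln Z - ln 2" using assms by (simp add: ln_div)
  ultimately show ?thesis by linarith
qed


lemma sqrt_div_aux:
  fixes x \<mu> :: real
  assumes "x > 0"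
  shows "\<mu> * sqrt x / x = \<mu> / sqrt x"
proof -
  have s: "sqrt x * sqrt x = x" using assms by simp
  have "\<mu> * sqrt x / x = \<mu> * sqrt x / (sqrt x * sqrt x)" using s by simp
  also have "\<dots> = \<mu> / sqrt x" using assms by (simp add: field_simps)
  finally show ?thesis .
qed

theorem proposition3p2:
  fixes d :: "nat \<Rightarrow> nat \<Rightarrow> real"
    and \<delta>j :: "nat \<Rightarrow> real \<Rightarrow> real"
    and M :: "'a measure"
    and N :: "real \<Rightarrow> 'a \<Rightarrow> nat"
    and n :: nat
    and dd :: "nat \<Rightarrow> real"
    and \<delta> :: "real \<Rightarrow> real"
    and v :: "real \<Rightarrow> real"
    and \<Delta> :: "real \<Rightarrow> real"
    and a :: "real \<Rightarrow> real"
  defines "Dj \<equiv> (\<lambda>j. pser (\<lambda>k. d k j))"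
    and "D \<equiv> pser dd"
    and "w \<equiv> (\<lambda>j t. d j j * (\<delta>j j t) ^ j / pser (\<lambda>k. d k j) (\<delta>j j t))"
    and "EN \<equiv> (\<lambda>t. integral\<^sup>L M (\<lambda>\<omega>. real (N t \<omega>)))"
  assumes d_nonneg: "\<And>k j. 0 \<le> d k j"
    and Dj_fin: "\<And>j x. x > 0 \<Longrightarrow> summable (\<lambda>k. d k j * x ^ k) \<and> Dj j x > 0"
    and \<delta>j_pos: "\<And>j t. t \<ge> 0 \<Longrightarrow> \<delta>j j t > 0"
    and \<delta>j_lim: "\<And>j. filterlim (\<delta>j j) at_top at_top"
    and wsum_fin: "\<And>x. x > 0 \<Longrightarrow>
          summable (\<lambda>j. d j j * x ^ j / Dj j x) \<and> (\<Sum>j. d j j * x ^ j / Dj j x) > 0"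
    and M_prob: "prob_space M"
    and N_meas: "\<And>t. t \<ge> 0 \<Longrightarrow> N t \<in> measurable M (count_space UNIV)"
    and N_dist: "\<And>t k. t \<ge> 0 \<Longrightarrow>
          measure M {\<omega> \<in> space M. N t \<omega> = k} = w k t / (\<Sum>j. w j t)"
    and B1_d: "\<And>j k. j \<ge> n \<Longrightarrow> d k j = dd k"
    and B1_\<delta>: "\<And>j. j \<ge> n \<Longrightarrow> \<delta>j j = \<delta>"
    and B1_v_pos: "\<And>x. x > 0 \<Longrightarrow> v x > 0"
    and B1_v_lim: "filterlim v at_top at_top"
    and B1_\<Delta>_diff: "\<And>u. u > 0 \<Longrightarrow> \<Delta> differentiable (at u)"
    and B1_lim: "\<And>u. u > 0 \<Longrightarrow> ((\<lambda>t. ln (D (u * t)) / v t) \<longlongrightarrow> \<Delta> u) at_top"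
    and B2: "\<not> bdd_above {k. d k k > 0}"
    and B3: "\<And>k. k < n \<Longrightarrow>
          (dd k > 0 \<longrightarrow>
             ((\<lambda>t. w k t / (dd k * (\<delta> t) ^ k / D (\<delta> t))) \<longlongrightarrow> 0) at_top)
          \<and> (dd k = 0 \<longrightarrow> d k k = 0)"
    and \<Delta>2: "deriv \<Delta> differentiable (at 1)"
    and H1: "\<And>u. (\<forall>t\<ge>0. u t > 0) \<Longrightarrow> (u \<longlongrightarrow> 1) at_top \<Longrightarrow>
          \<exists>B. \<forall>t\<ge>0. \<bar>ln (D (u t * \<delta> t) / D (\<delta> t)) - v (\<delta> t) * (\<Delta> (u t) - \<Delta> 1)\<bar> \<le> B"
    and H2: "\<exists>B. \<forall>t\<ge>0. \<bar>sqrt (v (\<delta> t)) *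
          (deriv (Lam \<Delta>) 0 - \<delta> t * deriv D (\<delta> t) / (v (\<delta> t) * D (\<delta> t)))\<bar> \<le> B"
    and EN_fin: "\<And>t. t \<ge> 0 \<Longrightarrow> integrable M (\<lambda>\<omega>. real (N t \<omega>))"
    and H3: "\<exists>B. \<forall>t\<ge>0. \<bar>(\<delta> t * deriv D (\<delta> t) / D (\<delta> t) - EN t) / sqrt (v (\<delta> t))\<bar> \<le> B"
    and a_pos: "\<And>t. t > 0 \<Longrightarrow> a t > 0"
    and a_lim: "(a \<longlongrightarrow> 0) at_top"
    and va_lim: "filterlim (\<lambda>t. v (\<delta> t) * a t) at_top at_top"
  shows "let X = (\<lambda>t \<omega>. (real (N t \<omega>) - EN t) / v (\<delta> t) * sqrt (v (\<delta> t) * a t));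
             s = (\<lambda>t. 1 / a t);
             L2 = deriv (deriv (Lam \<Delta>)) 0
         in (L2 > 0 \<longrightarrow> LDP M X s (rate_pos L2) \<and> good_rate_function (rate_pos L2))
          \<and> (L2 = 0 \<longrightarrow> LDP M X s rate_zero \<and> good_rate_function rate_zero)"
  proof -
  interpret prob_space M by (rule M_prob)
  define X where "X = (\<lambda>t \<omega>. (real (N t \<omega>) - EN t) / v (\<delta> t) * sqrt (v (\<delta> t) * a t))"
  define L2 where "L2 = deriv (deriv (Lam \<Delta>)) 0"
  have apos: "\<forall>\<^sub>F t in at_top. a t > 0"
    using eventually_gt_at_top[of "0::real"] by eventually_elim (rule a_pos)
  have meas: "\<forall>\<^sub>F t in at_top. X t \<in> borel_measurable M"
    using eventually_ge_at_top[of "0::real"]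
  proof eventually_elim
    case (elim t)
    have "(\<lambda>\<omega>. real (N t \<omega>)) \<in> borel_measurable M"
      by (rule measurable_compose[OF N_meas[OF elim]]) simp
    then show ?case unfolding X_def by measurable
  qed
  have ddn: "(\<lambda>k. d k n) = dd" using B1_d by auto
  have dd0: "0 \<le> dd k" for k using d_nonneg[of k n] B1_d[of n k] by simp
  have Dpos: "D x > 0" and Dsm: "summable (\<lambda>k. dd k * x ^ k)" if "x > 0" for x
    using Dj_fin[OF that, of n] unfolding Dj_def D_def ddn by (auto simp: B1_d)
  have \<delta>pos: "\<delta> t > 0" if "t \<ge> 0" for t using \<delta>j_pos[OF that, of n] B1_\<delta>[of n] by simp
  have w_ge: "w k t = dd k * \<delta> t ^ k / D (\<delta> t)" if "k \<ge> n" for k t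
  proof -
    have "(\<lambda>i. d i k) = dd" using B1_d[OF that] by auto
    then show ?thesis unfolding w_def D_def using B1_d[OF that, of k] B1_\<delta>[OF that] by simp
  qed
  have w0: "0 \<le> w k t" if "t \<ge> 0" for k t
  proof -
    have "pser (\<lambda>i. d i k) (\<delta>j k t) > 0" using Dj_fin[OF \<delta>j_pos[OF that], of k] by (simp add: Dj_def)
    then show ?thesis unfolding w_def using d_nonneg[of k k] \<delta>j_pos[OF that, of k] by simp
  qed
  have unb: "\<exists>j>m. dd j > 0" for m
  proof -
    obtain j where j: "j \<in> {k. d k k > 0}" "j > max m n" using B2
      by (metis bdd_above_def not_le_imp_less)
    then show ?thesis using B1_d[of j j] by (intro exI[of _ j]) auto
  qed
  have ratio: "((\<lambda>y. dd k * y ^ k / D y) \<longlongrightarrow> 0) at_top" for k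
    unfolding D_def by (rule ratio_to_zero[OF dd0 Dsm unb])
  have sumratio: "((\<lambda>y. (\<Sum>k<n. dd k * y ^ k) / D y) \<longlongrightarrow> 0) at_top"
  proof -
    have "((\<lambda>y. \<Sum>k<n. dd k * y ^ k / D y) \<longlongrightarrow> (\<Sum>k<n. 0)) at_top"
      by (intro tendsto_sum ratio)
    then show ?thesis by (simp add: sum_divide_distrib)
  qed
  have F5: "\<forall>\<^sub>F t in at_top. \<forall>k\<in>{..<n}. w k t \<le> dd k * \<delta> t ^ k / D (\<delta> t)"
  proof (rule eventually_ball_finite)
    show "finite {..<n}" by simp
    show "\<forall>k\<in>{..<n}. \<forall>\<^sub>F t in at_top. w k t \<le> dd k * \<delta> t ^ k / D (\<delta> t)"
    proof
      fix k assume "k \<in> {..<n}"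
      then have k: "k < n" by simp
      show "\<forall>\<^sub>F t in at_top. w k t \<le> dd k * \<delta> t ^ k / D (\<delta> t)"
      proof (cases "dd k > 0")
        case True
        have "\<forall>\<^sub>F t in at_top. w k t / (dd k * \<delta> t ^ k / D (\<delta> t)) < 1"
          using B3[OF k] True by (intro order_tendstoD) auto
        then show ?thesis using eventually_ge_at_top[of "0::real"]
        proof eventually_elim
          case (elim t)
          have "dd k * \<delta> t ^ k / D (\<delta> t) > 0" using True \<delta>pos[OF elim(2)] Dpos[OF \<delta>pos[OF elim(2)]] by simp
          then show ?case using elim(1) divide_less_eq_1_pos by (metis less_imp_le)
        qed
      next
        case False
        then have "dd k = 0" using dd0[of k] by simp
        then have "d k k = 0" using B3[OF k] by simp
        then show ?thesis by (simp add: w_def \<open>dd k = 0\<close>)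
      qed
    qed
  qed
  have Gb: "summable (\<lambda>k. w k t * exp (\<theta> * real k))
      \<and> (\<Sum>k. w k t * exp (\<theta> * real k)) \<le> D (exp \<theta> * \<delta> t) / D (\<delta> t)
      \<and> D (exp \<theta> * \<delta> t) / D (\<delta> t) - (\<Sum>k<n. dd k * (exp \<theta> * \<delta> t) ^ k) / D (\<delta> t)
           \<le> (\<Sum>k. w k t * exp (\<theta> * real k))"
    if t: "t \<ge> 0" and F: "\<forall>k\<in>{..<n}. w k t \<le> dd k * \<delta> t ^ k / D (\<delta> t)" for t \<theta>
  proof -
    let ?y = "exp \<theta> * \<delta> t"
    have ypos: "?y > 0" using \<delta>pos[OF t] by simp
    have Dd: "D (\<delta> t) > 0" using Dpos[OF \<delta>pos[OF t]] .
    let ?g = "\<lambda>k. w k t * exp (\<theta> * real k)"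
    let ?h = "\<lambda>k. dd k * ?y ^ k / D (\<delta> t)"
    have ex: "exp (\<theta> * real k) = exp \<theta> ^ k" for k
      using exp_of_nat_mult[of k \<theta>] by (simp add: mult.commute)
    have eq: "?g k = ?h k" if "k \<ge> n" for k
      using w_ge[OF that, of t] by (simp add: ex power_mult_distrib)
    have sh: "summable ?h" using Dsm[OF ypos] by (rule summable_divide)
    have g0: "0 \<le> ?g k" for k using w0[OF t] by simp
    have le: "?g k \<le> ?h k" if "k < n" for k
    proof -
      have "?g k \<le> dd k * \<delta> t ^ k / D (\<delta> t) * exp (\<theta> * real k)"
        using F that by (intro mult_right_mono) auto
      also have "\<dots> = ?h k" by (simp add: ex power_mult_distrib)
      finally show ?thesis .
    qed
    note GS = G_sandwich[of n ?g ?h, OF eq sh g0 le]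
    have sumh: "suminf ?h = D ?y / D (\<delta> t)"
      using suminf_divide[OF Dsm[OF ypos], of "D (\<delta> t)"] by (simp add: D_def pser_def)
    have sumh2: "(\<Sum>k<n. ?h k) = (\<Sum>k<n. dd k * ?y ^ k) / D (\<delta> t)"
      by (simp add: sum_divide_distrib)
    show ?thesis using GS sumh sumh2 by simp
  qed
  have LamE: "Lam \<Delta> = (\<lambda>\<theta>. \<Delta> (exp \<theta>) - \<Delta> 1)" by (rule ext) (simp add: Lam_def)
  have dLam: "(Lam \<Delta> has_real_derivative deriv \<Delta> (exp \<theta>) * exp \<theta>) (at \<theta>)" for \<theta>
  proof -
    have "(\<Delta> has_real_derivative deriv \<Delta> (exp \<theta>)) (at (exp \<theta>))"
      using B1_\<Delta>_diff[of "exp \<theta>"] by (simp add: DERIV_deriv_iff_real_differentiable)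
    from DERIV_diff[OF DERIV_chain2[OF this DERIV_exp] DERIV_const[of "\<Delta> 1"]]
    show ?thesis unfolding LamE by simp
  qed
  have dLamE: "deriv (Lam \<Delta>) = (\<lambda>\<theta>. deriv \<Delta> (exp \<theta>) * exp \<theta>)"
    by (rule ext) (rule DERIV_imp_deriv[OF dLam])
  have dLam': "(Lam \<Delta> has_real_derivative deriv (Lam \<Delta>) \<theta>) (at \<theta>)" for \<theta>
    using dLam[of \<theta>] by (simp add: dLamE)
  obtain K2 where K2: "(deriv (Lam \<Delta>) has_real_derivative K2) (at 0)"
  proof -
    have "(deriv \<Delta> has_real_derivative deriv (deriv \<Delta>) (exp 0)) (at (exp 0))"
      using \<Delta>2 by (simp add: DERIV_deriv_iff_real_differentiable)
    from DERIV_mult[OF DERIV_chain2[OF this DERIV_exp] DERIV_exp]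
    have "(deriv (Lam \<Delta>) has_real_derivative
      deriv (deriv \<Delta>) (exp 0) * exp 0 * exp 0 + exp 0 * deriv \<Delta> (exp 0)) (at 0)"
      unfolding dLamE .
    then show ?thesis by (rule that)
  qed
  have d2: "(deriv (Lam \<Delta>) has_real_derivative L2) (at 0)"
    using K2 DERIV_imp_deriv[OF K2] by (simp add: L2_def)
  have taylor: "((\<lambda>x. (Lam \<Delta> x - deriv (Lam \<Delta>) 0 * x) / x\<^sup>2) \<longlongrightarrow> L2 / 2) (at 0)"
    by (rule taylor_lhopital[OF dLam' d2]) (simp add: Lam_def)
  have \<delta>lim: "filterlim \<delta> at_top at_top" using \<delta>j_lim[of n] B1_\<delta>[of n] by simp
  have key: "(\<forall>\<^sub>F t in at_top. integrable M (\<lambda>\<omega>. exp (\<mu> * X t \<omega> / a t)))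
      \<and> ((\<lambda>t. a t * ln (integral\<^sup>L M (\<lambda>\<omega>. exp (\<mu> * X t \<omega> / a t)))) \<longlongrightarrow> L2 * \<mu>\<^sup>2 / 2) at_top" for \<mu>
  proof (cases "\<mu> = 0")
    case True
    have "integrable M (\<lambda>\<omega>. exp (\<mu> * X t \<omega> / a t))" for t using True by simp
    moreover have "integral\<^sup>L M (\<lambda>\<omega>. exp (\<mu> * X t \<omega> / a t)) = 1" for t using True by (simp add: prob_space)
    ultimately show ?thesis using True by simp
  next
    case False
    define \<theta> where "\<theta> = (\<lambda>t. \<mu> * sqrt (v (\<delta> t) * a t) / (v (\<delta> t) * a t))"
    define y where "y = (\<lambda>t. exp (\<theta> t) * \<delta> t)"
    define G where "G = (\<lambda>t. \<Sum>k. w k t * exp (\<theta> t * real k))"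
    define W where "W = (\<lambda>t. \<Sum>k. w k t)"
    define Q where "Q = (\<lambda>x. (Lam \<Delta> x - deriv (Lam \<Delta>) 0 * x) / x\<^sup>2)"
    define T1 where "T1 = (\<lambda>t. \<mu>\<^sup>2 * Q (\<theta> t))"
    define T2 where "T2 = (\<lambda>t. a t * \<theta> t * (v (\<delta> t) * deriv (Lam \<Delta>) 0 - EN t))"
    define T3 where "T3 = (\<lambda>t. a t * (ln (D (y t) / D (\<delta> t)) - v (\<delta> t) * (\<Delta> (exp (\<theta> t)) - \<Delta> 1)))"
    define T4 where "T4 = (\<lambda>t. a t * (ln (G t) - ln (D (y t) / D (\<delta> t))))"
    define T5 where "T5 = (\<lambda>t. a t * ln (W t))"
    have vapos: "\<forall>\<^sub>F t in at_top. v (\<delta> t) * a t > 0"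
      using eventually_gt_at_top[of "0::real"]
    proof eventually_elim
      case (elim t) then show ?case using B1_v_pos[OF \<delta>pos] a_pos by simp
    qed
    have \<theta>eq: "\<forall>\<^sub>F t in at_top. \<theta> t = \<mu> / sqrt (v (\<delta> t) * a t)"
      using vapos
    proof eventually_elim
      case (elim t)
      show ?case unfolding \<theta>_def using sqrt_div_aux[OF elim] .
    qed
    have \<theta>lim: "(\<theta> \<longlongrightarrow> 0) at_top"
    proof -
      have "((\<lambda>t. \<mu> / sqrt (v (\<delta> t) * a t)) \<longlongrightarrow> 0) at_top"
        by (intro tendsto_divide_0[OF tendsto_const] filterlim_at_top_imp_at_infinity
            filterlim_compose[OF sqrt_at_top va_lim])
      then show ?thesis using \<theta>eq by (simp add: tendsto_cong)
    qed
    have \<theta>ne: "\<forall>\<^sub>F t in at_top. \<theta> t \<noteq> 0"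
      using vapos
    proof eventually_elim
      case (elim t)
      have "v (\<delta> t) \<noteq> 0" "a t \<noteq> 0" using elim by auto
      then show ?case using elim False by (simp add: \<theta>_def)
    qed
    have \<theta>at: "filterlim \<theta> (at 0) at_top" by (rule filterlim_atI[OF \<theta>lim \<theta>ne])
    have ylim: "filterlim y at_top at_top"
      unfolding y_def
      by (rule filterlim_tendsto_pos_mult_at_top[OF _ _ \<delta>lim])
         (use tendsto_exp[OF \<theta>lim] in auto)
    have E1: "\<forall>\<^sub>F t in at_top. (\<Sum>k<n. dd k * y t ^ k) / D (y t) < 1 / 2"
      using filterlim_compose[OF sumratio ylim] by (rule order_tendstoD) simp
    have E2: "\<forall>\<^sub>F t in at_top. (\<Sum>k<n. dd k * \<delta> t ^ k) / D (\<delta> t) < 1 / 2"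
      using filterlim_compose[OF sumratio \<delta>lim] by (rule order_tendstoD) simp
    obtain B1 where B1: "\<forall>t\<ge>0. \<bar>ln (D (exp (\<theta> t) * \<delta> t) / D (\<delta> t)) - v (\<delta> t) * (\<Delta> (exp (\<theta> t)) - \<Delta> 1)\<bar> \<le> B1"
      using H1[of "\<lambda>t. exp (\<theta> t)"] tendsto_exp[OF \<theta>lim] by auto
    obtain B2 where B2: "\<forall>t\<ge>0. \<bar>sqrt (v (\<delta> t)) *
          (deriv (Lam \<Delta>) 0 - \<delta> t * deriv D (\<delta> t) / (v (\<delta> t) * D (\<delta> t)))\<bar> \<le> B2"
      using H2 by auto
    obtain B3 where B3': "\<forall>t\<ge>0. \<bar>(\<delta> t * deriv D (\<delta> t) / D (\<delta> t) - EN t) / sqrt (v (\<delta> t))\<bar> \<le> B3"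
      using H3 by auto
    have main: "\<forall>\<^sub>F t in at_top. integrable M (\<lambda>\<omega>. exp (\<mu> * X t \<omega> / a t))
        \<and> a t * ln (integral\<^sup>L M (\<lambda>\<omega>. exp (\<mu> * X t \<omega> / a t))) = T1 t + T2 t + T3 t + T4 t - T5 t
        \<and> norm (T2 t) \<le> \<bar>\<mu>\<bar> * sqrt (a t) * (B2 + B3)
        \<and> norm (T3 t) \<le> a t * B1
        \<and> norm (T4 t) \<le> a t * ln 2
        \<and> norm (T5 t) \<le> a t * ln 2"
      using eventually_gt_at_top[of "0::real"] F5 E1 E2 \<theta>ne
    proof eventually_elim
      case (elim t)
      have t0: "t \<ge> 0" using elim(1) by simp
      have at: "a t > 0" using a_pos elim(1) by simp
      have dt: "\<delta> t > 0" using \<delta>pos[OF t0] .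
      have vt: "v (\<delta> t) > 0" using B1_v_pos[OF dt] .
      have Dd: "D (\<delta> t) > 0" using Dpos[OF dt] .
      have yt: "y t > 0" using dt by (simp add: y_def)
      have Dy: "D (y t) > 0" using Dpos[OF yt] .
      note GB0 = Gb[OF t0 elim(2), of "\<theta> t"]
      have GB1: "summable (\<lambda>k. w k t * exp (\<theta> t * real k))" and GB2: "G t \<le> D (y t) / D (\<delta> t)"
        and GB3: "D (y t) / D (\<delta> t) - (\<Sum>k<n. dd k * y t ^ k) / D (\<delta> t) \<le> G t"
        using GB0 by (simp_all add: G_def y_def)
      note WB0 = Gb[OF t0 elim(2), of 0]
      have WB2: "W t \<le> 1" and WB3: "1 - (\<Sum>k<n. dd k * \<delta> t ^ k) / D (\<delta> t) \<le> W t"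
        using WB0 Dd by (simp_all add: W_def)
      have S1: "(\<Sum>k<n. dd k * y t ^ k) / D (\<delta> t) \<le> D (y t) / D (\<delta> t) / 2"
      proof -
        have "(\<Sum>k<n. dd k * y t ^ k) \<le> D (y t) / 2" using elim(3) Dy by (simp add: divide_less_eq)
        then have "(\<Sum>k<n. dd k * y t ^ k) / D (\<delta> t) \<le> (D (y t) / 2) / D (\<delta> t)"
          using Dd by (intro divide_right_mono) auto
        then show ?thesis by simp
      qed
      have Gl: "D (y t) / D (\<delta> t) / 2 \<le> G t" using GB3 S1 by linarith
      have Wl: "1 / 2 \<le> W t" using WB3 elim(4) by linarith
      have Z: "D (y t) / D (\<delta> t) > 0" using Dy Dd by simp
      have Gpos: "G t > 0" using Gl half_gt_zero[OF Z] by linarith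
      have Wpos: "W t > 0" using Wl by linarith
      have T4b: "norm (T4 t) \<le> a t * ln 2"
      proof -
        have "\<bar>ln (G t) - ln (D (y t) / D (\<delta> t))\<bar> \<le> ln 2" by (rule ln_sandwich[OF Z Gl GB2])
        then show ?thesis using at by (simp add: T4_def abs_mult mult_left_mono)
      qed
      have T5b: "norm (T5 t) \<le> a t * ln 2"
      proof -
        have "\<bar>ln (W t) - ln 1\<bar> \<le> ln 2" by (rule ln_sandwich) (use Wl WB2 in auto)
        then show ?thesis using at by (simp add: T5_def abs_mult mult_left_mono)
      qed
      have T3b: "norm (T3 t) \<le> a t * B1"
      proof -
        have "\<bar>ln (D (y t) / D (\<delta> t)) - v (\<delta> t) * (\<Delta> (exp (\<theta> t)) - \<Delta> 1)\<bar> \<le> B1"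
          using B1 t0 by (simp add: y_def)
        then show ?thesis using at by (simp add: T3_def abs_mult mult_left_mono)
      qed
      define sv where "sv = sqrt (v (\<delta> t))"
      define sa where "sa = sqrt (a t)"
      have sv: "sv * sv = v (\<delta> t)" "sv > 0" using vt by (simp_all add: sv_def)
      have sa: "sa * sa = a t" "sa > 0" using at by (simp_all add: sa_def)
      have \<theta>2: "\<theta> t = \<mu> / (sv * sa)"
        unfolding \<theta>_def using sqrt_div_aux[of "v (\<delta> t) * a t" \<mu>] vt at
        by (simp add: sv_def sa_def real_sqrt_mult)
      define A1 where "A1 = sv * (deriv (Lam \<Delta>) 0 - \<delta> t * deriv D (\<delta> t) / (v (\<delta> t) * D (\<delta> t)))"
      define A2 where "A2 = (\<delta> t * deriv D (\<delta> t) / D (\<delta> t) - EN t) / sv"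
      have A1b: "\<bar>A1\<bar> \<le> B2" using B2 t0 by (simp add: A1_def sv_def)
      have A2b: "\<bar>A2\<bar> \<le> B3" using B3' t0 by (simp add: A2_def sv_def)
      have idA: "v (\<delta> t) * deriv (Lam \<Delta>) 0 - EN t = sv * A1 + sv * A2"
        unfolding A1_def A2_def sv(1)[symmetric] using sv(2) Dd by (simp add: field_simps)
      have diffb: "\<bar>v (\<delta> t) * deriv (Lam \<Delta>) 0 - EN t\<bar> \<le> sv * (B2 + B3)"
      proof -
        have "\<bar>sv * A1 + sv * A2\<bar> \<le> sv * \<bar>A1\<bar> + sv * \<bar>A2\<bar>" using sv by (simp add: abs_mult abs_triangle_ineq[THEN order_trans])
        also have "\<dots> \<le> sv * B2 + sv * B3" using sv A1b A2b by (intro add_mono mult_left_mono) auto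
        finally show ?thesis unfolding idA by (simp add: distrib_left)
      qed
      have T2b: "norm (T2 t) \<le> \<bar>\<mu>\<bar> * sqrt (a t) * (B2 + B3)"
      proof -
        have "norm (T2 t) = a t * (\<bar>\<mu>\<bar> / (sv * sa)) * \<bar>v (\<delta> t) * deriv (Lam \<Delta>) 0 - EN t\<bar>"
          using at sv sa by (simp add: T2_def \<theta>2 abs_mult)
        also have "\<dots> \<le> a t * (\<bar>\<mu>\<bar> / (sv * sa)) * (sv * (B2 + B3))"
          using diffb at sv sa by (intro mult_left_mono) auto
        also have "\<dots> = \<bar>\<mu>\<bar> * sa * (B2 + B3)"
          using sv sa by (simp add: field_simps flip: sa(1))
        finally show ?thesis by (simp add: sa_def)
      qed
      have funeq: "(\<lambda>\<omega>. exp (\<mu> * X t \<omega> / a t)) = (\<lambda>\<omega>. exp (- \<theta> t * EN t) * exp (\<theta> t * real (N t \<omega>)))"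
      proof (rule ext)
        fix \<omega>
        have "\<mu> * X t \<omega> / a t = - \<theta> t * EN t + \<theta> t * real (N t \<omega>)"
          unfolding X_def \<theta>_def using vt at by (simp add: field_simps)
        then show "exp (\<mu> * X t \<omega> / a t) = exp (- \<theta> t * EN t) * exp (\<theta> t * real (N t \<omega>))"
          by (simp only: exp_add[symmetric])
      qed
      have pk: "(\<lambda>k. exp (\<theta> t * real k) * measure M {\<omega> \<in> space M. N t \<omega> = k}) = (\<lambda>k. w k t * exp (\<theta> t * real k) / W t)"
        by (rule ext) (simp add: N_dist[OF t0] W_def)
      have smp: "summable (\<lambda>k. exp (\<theta> t * real k) * measure M {\<omega> \<in> space M. N t \<omega> = k})"
        unfolding pk by (rule summable_divide[OF GB1])
      note EX = expect_nat[OF M_prob N_meas[OF t0], of "\<lambda>k. exp (\<theta> t * real k)", OF _ smp]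
      have intN: "integrable M (\<lambda>\<omega>. exp (\<theta> t * real (N t \<omega>)))" using EX by simp
      have EN': "integral\<^sup>L M (\<lambda>\<omega>. exp (\<theta> t * real (N t \<omega>))) = G t / W t"
        using EX unfolding pk by (simp add: suminf_divide[OF GB1] G_def)
      have int: "integrable M (\<lambda>\<omega>. exp (\<mu> * X t \<omega> / a t))"
        unfolding funeq using intN by simp
      have Eeq: "integral\<^sup>L M (\<lambda>\<omega>. exp (\<mu> * X t \<omega> / a t)) = exp (- \<theta> t * EN t) * (G t / W t)"
        unfolding funeq using EN' by simp
      have lnE: "ln (integral\<^sup>L M (\<lambda>\<omega>. exp (\<mu> * X t \<omega> / a t))) = - \<theta> t * EN t + ln (G t) - ln (W t)"
        unfolding Eeq using Gpos Wpos by (simp add: ln_mult ln_div)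
      have \<theta>sq: "\<mu>\<^sup>2 = (\<theta> t)\<^sup>2 * (v (\<delta> t) * a t)"
        unfolding \<theta>2 using sv sa by (simp add: power2_eq_square field_simps flip: sv(1) sa(1))
      have T1eq: "T1 t = a t * v (\<delta> t) * (Lam \<Delta> (\<theta> t) - deriv (Lam \<Delta>) 0 * \<theta> t)"
        unfolding T1_def Q_def \<theta>sq using elim(5) by (simp add: field_simps power2_eq_square)
      have "a t * ln (integral\<^sup>L M (\<lambda>\<omega>. exp (\<mu> * X t \<omega> / a t))) = T1 t + T2 t + T3 t + T4 t - T5 t"
        unfolding lnE T1eq T2_def T3_def T4_def T5_def Lam_def y_def by (simp add: algebra_simps)
      then show ?case using int T2b T3b T4b T5b by blast
    qed
    have lim1: "(T1 \<longlongrightarrow> \<mu>\<^sup>2 * (L2 / 2)) at_top"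
      unfolding T1_def Q_def by (intro tendsto_mult tendsto_const filterlim_compose[OF taylor \<theta>at])
    have lim2: "(T2 \<longlongrightarrow> 0) at_top"
    proof (rule Lim_null_comparison)
      show "\<forall>\<^sub>F t in at_top. norm (T2 t) \<le> \<bar>\<mu>\<bar> * sqrt (a t) * (B2 + B3)" using main by eventually_elim blast
      have "((\<lambda>t. \<bar>\<mu>\<bar> * sqrt (a t) * (B2 + B3)) \<longlongrightarrow> \<bar>\<mu>\<bar> * sqrt 0 * (B2 + B3)) at_top"
        by (intro tendsto_intros a_lim)
      then show "((\<lambda>t. \<bar>\<mu>\<bar> * sqrt (a t) * (B2 + B3)) \<longlongrightarrow> 0) at_top" by simp
    qed
    have lim3: "(T3 \<longlongrightarrow> 0) at_top"
    proof (rule Lim_null_comparison)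
      show "\<forall>\<^sub>F t in at_top. norm (T3 t) \<le> a t * B1" using main by eventually_elim blast
      have "((\<lambda>t. a t * B1) \<longlongrightarrow> 0 * B1) at_top" by (intro tendsto_intros a_lim)
      then show "((\<lambda>t. a t * B1) \<longlongrightarrow> 0) at_top" by simp
    qed
    have lim4: "(T4 \<longlongrightarrow> 0) at_top"
    proof (rule Lim_null_comparison)
      show "\<forall>\<^sub>F t in at_top. norm (T4 t) \<le> a t * ln 2" using main by eventually_elim blast
      have "((\<lambda>t. a t * ln 2) \<longlongrightarrow> 0 * ln 2) at_top" by (intro tendsto_intros a_lim)
      then show "((\<lambda>t. a t * ln 2) \<longlongrightarrow> 0) at_top" by simp
    qed
    have lim5: "(T5 \<longlongrightarrow> 0) at_top"
    proof (rule Lim_null_comparison)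
      show "\<forall>\<^sub>F t in at_top. norm (T5 t) \<le> a t * ln 2" using main by eventually_elim blast
      have "((\<lambda>t. a t * ln 2) \<longlongrightarrow> 0 * ln 2) at_top" by (intro tendsto_intros a_lim)
      then show "((\<lambda>t. a t * ln 2) \<longlongrightarrow> 0) at_top" by simp
    qed
    have "((\<lambda>t. T1 t + T2 t + T3 t + T4 t - T5 t) \<longlongrightarrow> \<mu>\<^sup>2 * (L2 / 2) + 0 + 0 + 0 - 0) at_top"
      by (intro tendsto_intros lim1 lim2 lim3 lim4 lim5)
    then have "((\<lambda>t. T1 t + T2 t + T3 t + T4 t - T5 t) \<longlongrightarrow> L2 * \<mu>\<^sup>2 / 2) at_top" by (simp add: mult.commute)
    moreover have "\<forall>\<^sub>F t in at_top. T1 t + T2 t + T3 t + T4 t - T5 t =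
        a t * ln (integral\<^sup>L M (\<lambda>\<omega>. exp (\<mu> * X t \<omega> / a t)))"
      using main by eventually_elim simp
    ultimately have "((\<lambda>t. a t * ln (integral\<^sup>L M (\<lambda>\<omega>. exp (\<mu> * X t \<omega> / a t)))) \<longlongrightarrow> L2 * \<mu>\<^sup>2 / 2) at_top"
      by (rule Lim_transform_eventually)
    moreover have "\<forall>\<^sub>F t in at_top. integrable M (\<lambda>\<omega>. exp (\<mu> * X t \<omega> / a t))"
      using main by eventually_elim blast
    ultimately show ?thesis by blast
  qed
  have intp: "\<And>\<mu>. \<forall>\<^sub>F t in at_top. integrable M (\<lambda>\<omega>. exp (\<mu> * X t \<omega> / a t))"
    using key by blast
  have limp: "\<And>\<mu>. ((\<lambda>t. a t * ln (integral\<^sup>L M (\<lambda>\<omega>. exp (\<mu> * X t \<omega> / a t)))) \<longlongrightarrow> L2 * \<mu>\<^sup>2 / 2) at_top"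
    using key by blast
  have pos: "LDP M X (\<lambda>t. 1 / a t) (rate_pos L2)" if "L2 > 0"
    by (rule GE_pos[OF M_prob meas apos a_lim intp limp that])
  have zero: "LDP M X (\<lambda>t. 1 / a t) rate_zero" if "L2 = 0"
    by (rule GE_zero[OF M_prob meas apos a_lim intp]) (use limp that in simp)
  show ?thesis
    unfolding Let_def X_def[symmetric] L2_def[symmetric]
    using pos zero rate_pos_good rate_zero_good by blast
qed

end
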